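(* The problem "given two automatic relations $R_1,R_2\subseteq\Sigma^*\times\Gamma^*$ with $R_1\cap R_2=\emptyset$, decide whether there is a recognizable relation $R$ with $R_1\subseteq R$ and $R\cap R_2=\emptyset$" reduces (via a computable reduction) to the problem "given regular languages $S,T\subseteq(\Sigma\cup\Gamma)^*$ both with finite shiftlag, decide whether $\llbracket S\rrbracket\in\textsc{Rel}(T)$".
   Context: $\Sigma,\Gamma$ are disjoint finite alphabets. For $w\in(\Sigma\cup\Gamma)^*$, $\llbracket w\rrbracket=(\pi_{\mathtt i}(w),\pi_{\mathtt o}(w))$ where $\pi_{\mathtt i}$ (resp. $\pi_{\mathtt o}$) deletes all letters of $\Gamma$ (resp. $\Sigma$), and $\llbracket L\rrbracket=\{\llbracket w\rrbracket:w\in L\}$. $\textsc{Rel}(T)=\{\llbracket T'\rrbracket: T'\subseteq T,\ T'\text{ regular}\}$. A relation is automatic if it equals $\llbracket L\rrbracket$ for some regular $L\subseteq(\Sigma\Gamma)^*(\Sigma^*+\Gamma^* )$ (and is given by such $L$); it is recognizable if it is a finite union of products $U\times V$ of regular $U\subseteq\Sigma^*$, $V\subseteq\Gamma^*$. A position $i$ of $w$ is $\geq k$-lagged if the absolute difference between the numbers of $\Sigma$-letters and $\Gamma$-letters in $w[1..i]$ is at least $k$. A shift of $w$ is a position $i\in\{1,\dots,|w|-1\}$ with exactly one of $w[i],w[i+1]$ in $\Sigma$; shifts $i<j$ are consecutive if no shift lies strictly between them. $\mathit{shiftlag}(w)$ is the maximal $n$ such that $w$ contains $n$ consecutive shifts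 all $\geq n$-lagged; a language has finite shiftlag if the supremum over its words is finite. *)

theory Defs
  imports Main "HOL-Library.Nat_Bijection"
begin

datatype recf = Zf | Sf | Idf nat | Cnf recf "recf list" | Prf recf recf | Mnf recf

inductive reval :: "recf \<Rightarrow> nat list \<Rightarrow> nat \<Rightarrow> bool" where
  zero: "reval Zf xs 0"
| suc: "reval Sf (x # xs) (Suc x)"
| proj: "i < length xs \<Longrightarrow> reval (Idf i) xs (xs ! i)"
| comp: "length gs = length ys \<Longrightarrow> (\<forall>k < length gs. reval (gs ! k) xs (ys ! k))
          \<Longrightarrow> reval f ys z \<Longrightarrow> reval (Cnf f gs) xs z"
| pr0: "reval f xs y \<Longrightarrow> reval (Prf f g) (0 # xs) y"
| prS: "reval (Prf f g) (n # xs) y \<Longrightarrow> reval g (y # n # xs) z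
          \<Longrightarrow> reval (Prf f g) (Suc n # xs) z"
| mn: "reval f (n # xs) 0 \<Longrightarrow> (\<forall>m < n. \<exists>y. y \<noteq> 0 \<and> reval f (m # xs) y)
          \<Longrightarrow> reval (Mnf f) xs n"

definition computable :: "(nat \<Rightarrow> nat) \<Rightarrow> bool" where
  "computable F \<longleftrightarrow> (\<exists>r. \<forall>n. reval r [n] (F n))"

type_synonym 'c nfa = "nat list \<times> (nat \<times> 'c \<times> nat) list \<times> nat list"

fun nfa_init :: "'c nfa \<Rightarrow> nat set" where "nfa_init (I, D, F) = set I"
fun nfa_trans :: "'c nfa \<Rightarrow> (nat \<times> 'c \<times> nat) set" where "nfa_trans (I, D, F) = set D"
fun nfa_final :: "'c nfa \<Rightarrow> nat set" where "nfa_final (I, D, F) = set F"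

fun reach :: "'c nfa \<Rightarrow> nat \<Rightarrow> 'c list \<Rightarrow> nat \<Rightarrow> bool" where
  "reach A p [] q \<longleftrightarrow> p = q"
| "reach A p (c # w) q \<longleftrightarrow> (\<exists>p'. (p, c, p') \<in> nfa_trans A \<and> reach A p' w q)"

definition lang :: "'c nfa \<Rightarrow> 'c list set" where
  "lang A = {w. \<exists>p\<in>nfa_init A. \<exists>q\<in>nfa_final A. reach A p w q}"

definition regular :: "'c list set \<Rightarrow> bool" where
  "regular L \<longleftrightarrow> (\<exists>A. lang A = L)"

definition letter_idx :: "'c::enum \<Rightarrow> nat" where
  "letter_idx c = length (takeWhile (\<lambda>x. x \<noteq> c) (enum_class.enum :: 'c list))"

fun enc_nfa :: "'c::enum nfa \<Rightarrow> nat" where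
  "enc_nfa (I, D, F) = prod_encode (list_encode I,
     prod_encode (list_encode (map (\<lambda>(p, c, q). prod_encode (p, prod_encode (letter_idx c, q))) D),
                  list_encode F))"

definition enc_pair :: "'c::enum nfa \<Rightarrow> 'c nfa \<Rightarrow> nat" where
  "enc_pair A B = prod_encode (enc_nfa A, enc_nfa B)"

definition pi_i :: "('s + 'g) list \<Rightarrow> 's list" where
  "pi_i w = map projl (filter isl w)"

definition pi_o :: "('s + 'g) list \<Rightarrow> 'g list" where
  "pi_o w = map projr (filter (\<lambda>x. \<not> isl x) w)"

definition sem :: "('s + 'g) list \<Rightarrow> 's list \<times> 'g list" where
  "sem w = (pi_i w, pi_o w)"

definition semL :: "('s + 'g) list set \<Rightarrow> ('s list \<times> 'g list) set" where
  "semL L = sem ` L"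

definition Rel :: "('s + 'g) list set \<Rightarrow> ('s list \<times> 'g list) set set" where
  "Rel T = {semL T' | T'. T' \<subseteq> T \<and> regular T'}"

definition sync_words :: "('s + 'g) list set" where
  "sync_words = {concat (map (\<lambda>(a, b). [Inl a, Inr b]) u) @ v | u v.
                   v \<in> lists (range Inl) \<or> v \<in> lists (range Inr)}"

definition recognizable :: "('s list \<times> 'g list) set \<Rightarrow> bool" where
  "recognizable R \<longleftrightarrow> (\<exists>ps :: ('s list set \<times> 'g list set) list.
      (\<forall>(U, V) \<in> set ps. regular U \<and> regular V) \<and> R = (\<Union>(U, V) \<in> set ps. U \<times> V))"

text \<open>Positions are 1-based: position i refers to w ! (i - 1).\<close>
definition lag :: "('s + 'g) list \<Rightarrow> nat \<Rightarrow> nat" where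
  "lag w i = nat \<bar>int (length (filter isl (take i w))) - int (length (filter (\<lambda>x. \<not> isl x) (take i w)))\<bar>"

definition is_shift :: "('s + 'g) list \<Rightarrow> nat \<Rightarrow> bool" where
  "is_shift w i \<longleftrightarrow> 1 \<le> i \<and> i \<le> length w - 1 \<and> isl (w ! (i - 1)) \<noteq> isl (w ! i)"

definition has_consec_lagged_shifts :: "('s + 'g) list \<Rightarrow> nat \<Rightarrow> bool" where
  "has_consec_lagged_shifts w n \<longleftrightarrow> (\<exists>is :: nat list. length is = n \<and> sorted_wrt (<) is \<and>
      (\<forall>i \<in> set is. is_shift w i \<and> lag w i \<ge> n) \<and>
      (\<forall>k. Suc k < length is \<longrightarrow> \<not> (\<exists>j. is ! k < j \<and> j < is ! Suc k \<and> is_shift w j)))"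

definition shiftlag :: "('s + 'g) list \<Rightarrow> nat" where
  "shiftlag w = (GREATEST n. has_consec_lagged_shifts w n)"

definition finite_shiftlag :: "('s + 'g) list set \<Rightarrow> bool" where
  "finite_shiftlag L \<longleftrightarrow> (\<exists>B. \<forall>w \<in> L. shiftlag w \<le> B)"

end

theory Submission
  imports Defs
begin


definition rfk :: "nat \<Rightarrow> (nat list \<Rightarrow> nat) \<Rightarrow> bool" where
  "rfk k f \<longleftrightarrow> (\<exists>r. \<forall>xs. length xs = k \<longrightarrow> reval r xs (f xs))"

lemma reval_const: "reval (((\<lambda>r. Cnf Sf [r]) ^^ c) Zf) xs c"
proof (induction c)
  case 0 then show ?case by (simp add: reval.zero)
next
  case (Suc c)
  have "reval Sf [c] (Suc c)" using reval.suc[of c "[]"] by simp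
  then show ?case using reval.comp[of "[((\<lambda>r. Cnf Sf [r]) ^^ c) Zf]" "[c]" xs Sf "Suc c"] Suc
    by simp
qed

named_theorems rfi

lemma rfk_const[rfi]: "rfk k (\<lambda>xs. c)"
  unfolding rfk_def using reval_const by blast

lemma rfk_proj[rfi]: "i < k \<Longrightarrow> rfk k (\<lambda>xs. xs ! i)"
  unfolding rfk_def using reval.proj by blast

lemma rfk_cong: "rfk k f \<Longrightarrow> (\<And>xs. length xs = k \<Longrightarrow> f xs = g xs) \<Longrightarrow> rfk k g"
  unfolding rfk_def by metis

lemma rfk_comp:
  assumes F: "rfk m F" and len: "length gs = m" and G: "\<And>j. j < m \<Longrightarrow> rfk k (gs ! j)"
  shows "rfk k (\<lambda>xs. F (map (\<lambda>g. g xs) gs))"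
proof -
  from G have "\<forall>j. \<exists>r. j < m \<longrightarrow> (\<forall>xs. length xs = k \<longrightarrow> reval r xs ((gs ! j) xs))"
    unfolding rfk_def by blast
  then obtain R where R: "\<And>j xs. j < m \<Longrightarrow> length xs = k \<Longrightarrow> reval (R j) xs ((gs ! j) xs)"
    by metis
  from F obtain rF where rF: "\<And>ys. length ys = m \<Longrightarrow> reval rF ys (F ys)" unfolding rfk_def by blast
  show ?thesis unfolding rfk_def
  proof (intro exI allI impI)
    fix xs :: "nat list" assume "length xs = k"
    then show "reval (Cnf rF (map R [0..<m])) xs (F (map (\<lambda>g. g xs) gs))"
      by (intro reval.comp[of "map R [0..<m]" "map (\<lambda>g. g xs) gs"]) (auto simp: len R rF)
  qed
qed

lemma rfk_comp1:
  assumes "rfk 1 F" "rfk k g"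
  shows "rfk k (\<lambda>xs. F [g xs])"
  using rfk_comp[OF assms(1), of "[g]" k] assms(2) by auto

lemma rfk_comp2:
  assumes "rfk 2 F" "rfk k g" "rfk k h"
  shows "rfk k (\<lambda>xs. F [g xs, h xs])"
proof -
  have "\<And>j. j < 2 \<Longrightarrow> rfk k ([g,h] ! j)"
  proof -
    fix j :: nat assume "j < 2" then have "j = 0 \<or> j = 1" by arith
    then show "rfk k ([g,h] ! j)" using assms by auto
  qed
  then show ?thesis using rfk_comp[OF assms(1), of "[g,h]" k] by simp
qed

lemma rfk_comp3:
  assumes "rfk 3 F" "rfk k g" "rfk k h" "rfk k l"
  shows "rfk k (\<lambda>xs. F [g xs, h xs, l xs])"
proof -
  have "\<And>j. j < 3 \<Longrightarrow> rfk k ([g,h,l] ! j)"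
  proof -
    fix j :: nat assume "j < 3" then have "j = 0 \<or> j = 1 \<or> j = 2" by arith
    then show "rfk k ([g,h,l] ! j)" using assms by auto
  qed
  then show ?thesis using rfk_comp[OF assms(1), of "[g,h,l]" k] by simp
qed

definition precL :: "(nat list \<Rightarrow> nat) \<Rightarrow> (nat list \<Rightarrow> nat) \<Rightarrow> nat \<Rightarrow> nat list \<Rightarrow> nat" where
  "precL f g n xs = rec_nat (f xs) (\<lambda>i a. g (a # i # xs)) n"

lemma rfk_prec0:
  assumes f: "rfk k f" and g: "rfk (Suc (Suc k)) g"
  shows "rfk (Suc k) (\<lambda>ys. precL f g (ys ! 0) (tl ys))"
proof -
  from f obtain rf where rf: "\<And>xs. length xs = k \<Longrightarrow> reval rf xs (f xs)" unfolding rfk_def by blast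
  from g obtain rg where rg: "\<And>xs. length xs = Suc (Suc k) \<Longrightarrow> reval rg xs (g xs)" unfolding rfk_def by blast
  have main: "reval (Prf rf rg) (n # xs) (precL f g n xs)" if "length xs = k" for n xs
  proof (induction n)
    case 0 then show ?case using rf[OF that] by (simp add: precL_def reval.pr0)
  next
    case (Suc n)
    have "reval rg (precL f g n xs # n # xs) (g (precL f g n xs # n # xs))" using rg that by simp
    then show ?case using Suc reval.prS by (fastforce simp: precL_def)
  qed
  show ?thesis unfolding rfk_def
  proof (intro exI allI impI)
    fix ys :: "nat list" assume "length ys = Suc k"
    then obtain n xs where "ys = n # xs" "length xs = k" by (cases ys) auto
    then show "reval (Prf rf rg) ys (precL f g (ys ! 0) (tl ys))" using main by simp
  qed
qed

lemma rfk_prec[rfi]: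
  assumes f: "rfk k f" and g: "rfk (Suc (Suc k)) g" and n: "rfk k n"
  shows "rfk k (\<lambda>xs. precL f g (n xs) xs)"
proof -
  have "rfk k (\<lambda>xs. (\<lambda>ys. precL f g (ys ! 0) (tl ys)) (map (\<lambda>h. h xs) (n # map (\<lambda>j xs. xs ! j) [0..<k])))"
    by (rule rfk_comp[OF rfk_prec0[OF f g]]) (auto simp: n nth_Cons rfk_proj split: nat.splits)
  then show ?thesis
    by (rule rfk_cong) (simp add: o_def, metis map_nth)
qed

definition "addR = Prf (Idf 0) (Cnf Sf [Idf 0])"
lemma reval_add: "reval addR [a, b] (a + b)"
proof (induction a)
  case 0 then show ?case by (simp add: addR_def reval.pr0 reval.proj[of 0 "[b]", simplified])
next
  case (Suc a)
  have h: "reval (Cnf Sf [Idf 0]) [a + b, a, b] (Suc (a + b))"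
    by (rule reval.comp[of _ "[a+b]"]) (auto intro: reval.proj[of 0 "[a+b,a,b]", simplified] reval.suc[of _ "[]", simplified])
  show ?case using reval.prS[OF Suc.IH[unfolded addR_def] h] by (simp add: addR_def)
qed

lemma rfk_add2: "rfk 2 (\<lambda>xs. xs ! 0 + xs ! 1)"
  unfolding rfk_def
proof (intro exI allI impI)
  fix xs :: "nat list" assume "length xs = 2"
  then obtain a b where "xs = [a, b]" by (cases xs; cases "tl xs") auto
  then show "reval addR xs (xs ! 0 + xs ! 1)" using reval_add by simp
qed

lemma rfk_add[rfi]: "rfk k f \<Longrightarrow> rfk k g \<Longrightarrow> rfk k (\<lambda>xs. f xs + g xs)"
  using rfk_comp2[OF rfk_add2] by simp

lemma rfk_Suc[rfi]: "rfk k f \<Longrightarrow> rfk k (\<lambda>xs. Suc (f xs))"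
proof -
  assume "rfk k f"
  then have "rfk k (\<lambda>xs. f xs + 1)" by (rule rfk_add[OF _ rfk_const])
  then show ?thesis by simp
qed

lemma len2: "length xs = 2 \<Longrightarrow> xs = [xs ! 0, xs ! 1]"
  by (cases xs; cases "tl xs") auto
lemma len3: "length xs = 3 \<Longrightarrow> xs = [xs ! 0, xs ! 1, xs ! 2]"
  by (cases xs; cases "tl xs"; cases "tl (tl xs)") auto


lemma rfk_mult2: "rfk 2 (\<lambda>xs. xs ! 0 * xs ! 1)"
proof -
  have r: "rfk (Suc (Suc 0)) (\<lambda>ys. precL (\<lambda>xs. 0) (\<lambda>ys. ys ! 0 + ys ! 2) (ys ! 0) (tl ys))"
    by (rule rfk_prec0) (intro rfi | simp)+
  have e: "precL (\<lambda>xs. 0) (\<lambda>ys. ys ! 0 + ys ! 2) a [b] = a * b" for a b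
    by (induction a) (auto simp: precL_def)
  show ?thesis
    unfolding numeral_2_eq_2 One_nat_def by (intro rfk_cong[OF r]) (use e in \<open>auto simp: length_Suc_conv\<close>)
qed

lemma rfk_mult[rfi]: "rfk k f \<Longrightarrow> rfk k g \<Longrightarrow> rfk k (\<lambda>xs. f xs * g xs)"
  using rfk_comp2[OF rfk_mult2] by simp

lemma rfk_pred1: "rfk 1 (\<lambda>xs. xs ! 0 - 1)"
proof -
  have r: "rfk (Suc 0) (\<lambda>ys. precL (\<lambda>xs. 0) (\<lambda>ys. ys ! 1) (ys ! 0) (tl ys))"
    by (rule rfk_prec0) (intro rfi | simp)+
  have e: "precL (\<lambda>xs. 0) (\<lambda>ys. ys ! 1) a [] = a - 1" for a
    by (induction a) (auto simp: precL_def)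
  show ?thesis
    unfolding numeral_2_eq_2 One_nat_def by (intro rfk_cong[OF r]) (use e in \<open>auto simp: length_Suc_conv\<close>)
qed

lemma rfk_pred[rfi]: "rfk k f \<Longrightarrow> rfk k (\<lambda>xs. f xs - 1)"
  using rfk_comp1[OF rfk_pred1] by simp

lemma rfk_monus2: "rfk 2 (\<lambda>xs. xs ! 1 - xs ! 0)"
proof -
  have r: "rfk (Suc (Suc 0)) (\<lambda>ys. precL (\<lambda>xs. xs ! 0) (\<lambda>ys. ys ! 0 - 1) (ys ! 0) (tl ys))"
    by (rule rfk_prec0) (intro rfi | simp)+
  have e: "precL (\<lambda>xs. xs ! 0) (\<lambda>ys. ys ! 0 - 1) a [b] = b - a" for a b
    by (induction a) (auto simp: precL_def)
  show ?thesis
    unfolding numeral_2_eq_2 One_nat_def by (intro rfk_cong[OF r]) (use e in \<open>auto simp: length_Suc_conv\<close>)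
qed

lemma rfk_monus[rfi]: "rfk k f \<Longrightarrow> rfk k g \<Longrightarrow> rfk k (\<lambda>xs. f xs - g xs)"
  using rfk_comp2[OF rfk_monus2, of k g f] by simp

lemma rfk_tri1: "rfk 1 (\<lambda>xs. triangle (xs ! 0))"
proof -
  have r: "rfk (Suc 0) (\<lambda>ys. precL (\<lambda>xs. 0) (\<lambda>ys. ys ! 0 + Suc (ys ! 1)) (ys ! 0) (tl ys))"
    by (rule rfk_prec0) (intro rfi | simp)+
  have e: "precL (\<lambda>xs. 0) (\<lambda>ys. ys ! 0 + Suc (ys ! 1)) a [] = triangle a" for a
    by (induction a) (auto simp: precL_def)
  show ?thesis
    unfolding numeral_2_eq_2 One_nat_def by (intro rfk_cong[OF r]) (use e in \<open>auto simp: length_Suc_conv\<close>)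
qed

lemma rfk_tri[rfi]: "rfk k f \<Longrightarrow> rfk k (\<lambda>xs. triangle (f xs))"
  using rfk_comp1[OF rfk_tri1] by simp

lemma rfk_pe[rfi]: "rfk k f \<Longrightarrow> rfk k g \<Longrightarrow> rfk k (\<lambda>xs. prod_encode (f xs, g xs))"
proof -
  assume "rfk k f" "rfk k g"
  then have "rfk k (\<lambda>xs. triangle (f xs + g xs) + f xs)" by (intro rfk_add rfk_tri)
  then show ?thesis by (simp add: prod_encode_def)
qed


definition pd1 :: "nat \<Rightarrow> nat" where "pd1 m = fst (prod_decode m)"
definition pd2 :: "nat \<Rightarrow> nat" where "pd2 m = snd (prod_decode m)"

lemma pd1_pe[simp]: "pd1 (prod_encode (a, b)) = a" by (simp add: pd1_def)
lemma pd2_pe[simp]: "pd2 (prod_encode (a, b)) = b" by (simp add: pd2_def)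

lemma triangle_mono: "a \<le> b \<Longrightarrow> triangle a \<le> triangle b"
  by (induction b) (auto simp: le_Suc_eq)

definition kk :: "nat \<Rightarrow> nat" where
  "kk m = rec_nat 0 (\<lambda>j a. a + (1 - (triangle (Suc j) - m))) m"

lemma rec_sum: "rec_nat 0 (\<lambda>j a. a + h j) n = (\<Sum>j<n. h j)"
  by (induction n) auto

lemma kk_pe: "kk (prod_encode (x, y)) = x + y"
proof -
  define m where "m = prod_encode (x, y)"
  define s where "s = x + y"
  have m: "m = triangle s + x" by (simp add: m_def s_def prod_encode_def)
  have "s \<le> m" using m by (induction s) auto
  have h: "(1 - (triangle (Suc j) - m)) = (if Suc j \<le> s then 1 else 0)" for j
  proof (cases "Suc j \<le> s")
    case True then show ?thesis using triangle_mono[OF True] m by simp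
  next
    case False
    then have "triangle (Suc s) \<le> triangle (Suc j)" by (intro triangle_mono) simp
    then show ?thesis using False m s_def by simp
  qed
  have c: "(\<Sum>j<n. (if Suc j \<le> s then 1 else 0::nat)) = min n s" for n
    by (induction n) auto
  show ?thesis unfolding kk_def m_def[symmetric] rec_sum h c using \<open>s \<le> m\<close> s_def by simp
qed

lemma pd1_eq: "pd1 m = m - triangle (kk m)"
proof -
  obtain x y where "m = prod_encode (x, y)" by (metis prod_decode_inverse surj_pair)
  then show ?thesis by (simp add: kk_pe) (simp add: prod_encode_def)
qed

lemma pd2_eq: "pd2 m = kk m - pd1 m"
proof -
  obtain x y where "m = prod_encode (x, y)" by (metis prod_decode_inverse surj_pair)
  then show ?thesis by (simp add: kk_pe)
qed

lemma rfk_kk1: "rfk 1 (\<lambda>xs. kk (xs ! 0))"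
proof -
  have "rfk 1 (\<lambda>xs. precL (\<lambda>xs. 0) (\<lambda>ys. ys ! 0 + (1 - (triangle (Suc (ys ! 1)) - ys ! 2))) (xs ! 0) xs)"
    by (intro rfi) simp_all
  then show ?thesis
    by (rule rfk_cong) (auto simp: length_Suc_conv precL_def kk_def)
qed

lemma rfk_kk[rfi]: "rfk k f \<Longrightarrow> rfk k (\<lambda>xs. kk (f xs))"
  using rfk_comp1[OF rfk_kk1] by simp

lemma rfk_pd1[rfi]: "rfk k f \<Longrightarrow> rfk k (\<lambda>xs. pd1 (f xs))"
  unfolding pd1_eq by (intro rfi)

lemma rfk_pd2[rfi]: "rfk k f \<Longrightarrow> rfk k (\<lambda>xs. pd2 (f xs))"
  unfolding pd2_eq pd1_eq by (intro rfi)

lemma eqflag: "(Suc 0 - (a - b)) * (Suc 0 - (b - a)) = (if a = b then 1 else (0::nat))"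
  by (cases "a < b") auto

lemma rfk_if_eq[rfi]: "rfk k a \<Longrightarrow> rfk k b \<Longrightarrow> rfk k c \<Longrightarrow> rfk k d \<Longrightarrow>
  rfk k (\<lambda>xs. if a xs = b xs then c xs else d xs)"
proof -
  assume r: "rfk k a" "rfk k b" "rfk k c" "rfk k d"
  have "rfk k (\<lambda>xs. (1 - (a xs - b xs)) * (1 - (b xs - a xs)) * c xs + (1 - (1 - (a xs - b xs)) * (1 - (b xs - a xs))) * d xs)"
    using r by (intro rfi)
  then show ?thesis by (rule rfk_cong) (simp add: eqflag)
qed

lemma rfk_if_le[rfi]: "rfk k a \<Longrightarrow> rfk k b \<Longrightarrow> rfk k c \<Longrightarrow> rfk k d \<Longrightarrow>
  rfk k (\<lambda>xs. if a xs \<le> b xs then c xs else d xs)"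
proof -
  assume r: "rfk k a" "rfk k b" "rfk k c" "rfk k d"
  have "rfk k (\<lambda>xs. (1 - (a xs - b xs)) * c xs + (1 - (1 - (a xs - b xs))) * d xs)"
    using r by (intro rfi)
  then show ?thesis by (rule rfk_cong) (simp add: eqflag)
qed

lemma rfk_if_less[rfi]: "rfk k a \<Longrightarrow> rfk k b \<Longrightarrow> rfk k c \<Longrightarrow> rfk k d \<Longrightarrow>
  rfk k (\<lambda>xs. if a xs < b xs then c xs else d xs)"
proof -
  assume r: "rfk k a" "rfk k b" "rfk k c" "rfk k d"
  have "rfk k (\<lambda>xs. if Suc (a xs) \<le> b xs then c xs else d xs)"
    using r by (intro rfi)
  then show ?thesis by (rule rfk_cong) auto
qed

lemma computable_rfk: "computable F \<longleftrightarrow> rfk 1 (\<lambda>xs. F (xs ! 0))"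
  unfolding computable_def rfk_def
proof
  assume "\<exists>r. \<forall>n. reval r [n] (F n)"
  then show "\<exists>r. \<forall>xs. length xs = 1 \<longrightarrow> reval r xs (F (xs ! 0))"
    by (metis One_nat_def length_0_conv length_Suc_conv nth_Cons_0)
next
  assume "\<exists>r. \<forall>xs. length xs = 1 \<longrightarrow> reval r xs (F (xs ! 0))"
  then show "\<exists>r. \<forall>n. reval r [n] (F n)" by (metis One_nat_def length_Cons list.size(3) nth_Cons_0)
qed

named_theorems ci

lemma c_id[ci]: "computable (\<lambda>x. x)"
  unfolding computable_rfk by (intro rfi) simp
lemma c_const[ci]: "computable (\<lambda>x. c)"
  unfolding computable_rfk by (intro rfi)
lemma c_add[ci]: "computable f \<Longrightarrow> computable g \<Longrightarrow> computable (\<lambda>x. f x + g x)"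
  unfolding computable_rfk by (intro rfi)
lemma c_sub[ci]: "computable f \<Longrightarrow> computable g \<Longrightarrow> computable (\<lambda>x. f x - g x)"
  unfolding computable_rfk by (intro rfi)
lemma c_mult[ci]: "computable f \<Longrightarrow> computable g \<Longrightarrow> computable (\<lambda>x. f x * g x)"
  unfolding computable_rfk by (intro rfi)
lemma c_Suc[ci]: "computable f \<Longrightarrow> computable (\<lambda>x. Suc (f x))"
  unfolding computable_rfk by (intro rfi)
lemma c_pe[ci]: "computable f \<Longrightarrow> computable g \<Longrightarrow> computable (\<lambda>x. prod_encode (f x, g x))"
  unfolding computable_rfk by (intro rfi)
lemma c_pd1[ci]: "computable f \<Longrightarrow> computable (\<lambda>x. pd1 (f x))"
  unfolding computable_rfk by (intro rfi)
lemma c_pd2[ci]: "computable f \<Longrightarrow> computable (\<lambda>x. pd2 (f x))"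
  unfolding computable_rfk by (intro rfi)
lemma c_if_eq[ci]: "computable a \<Longrightarrow> computable b \<Longrightarrow> computable c \<Longrightarrow> computable d \<Longrightarrow>
  computable (\<lambda>x. if a x = b x then c x else d x)"
  unfolding computable_rfk by (intro rfi)
lemma c_if_le[ci]: "computable a \<Longrightarrow> computable b \<Longrightarrow> computable c \<Longrightarrow> computable d \<Longrightarrow>
  computable (\<lambda>x. if a x \<le> b x then c x else d x)"
  unfolding computable_rfk by (intro rfi)
lemma c_if_less[ci]: "computable a \<Longrightarrow> computable b \<Longrightarrow> computable c \<Longrightarrow> computable d \<Longrightarrow>
  computable (\<lambda>x. if a x < b x then c x else d x)"
  unfolding computable_rfk by (intro rfi)

lemma c_comp: "computable H \<Longrightarrow> computable f \<Longrightarrow> computable (\<lambda>x. H (f x))"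
  unfolding computable_rfk using rfk_comp1 by fastforce

lemma c_prec[ci]:
  assumes f: "computable f" and g: "computable (\<lambda>p. g (pd1 p) (pd1 (pd2 p)) (pd2 (pd2 p)))"
    and n: "computable n"
  shows "computable (\<lambda>x. rec_nat (f x) (\<lambda>i a. g a i x) (n x))"
proof -
  let ?G = "\<lambda>p. g (pd1 p) (pd1 (pd2 p)) (pd2 (pd2 p))"
  have G3: "rfk 3 (\<lambda>ys. ?G (prod_encode (ys ! 0, prod_encode (ys ! 1, ys ! 2))))"
    using rfk_comp1[OF g[unfolded computable_rfk], of 3 "\<lambda>ys. prod_encode (ys ! 0, prod_encode (ys ! 1, ys ! 2))"]
    by (simp add: rfk_pe rfk_proj)
  have "rfk 1 (\<lambda>xs. precL (\<lambda>xs. f (xs ! 0)) (\<lambda>ys. ?G (prod_encode (ys ! 0, prod_encode (ys ! 1, ys ! 2)))) (n (xs ! 0)) xs)"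
    apply (rule rfk_prec)
    using f n G3 unfolding computable_rfk numeral_3_eq_3 by (auto intro: rfk_comp1[of "\<lambda>xs. n (xs!0)", simplified])
  note r = this
  have e: "precL (\<lambda>xs. f (xs ! 0)) (\<lambda>ys. g (ys ! 0) (ys ! Suc 0) (ys ! 2)) m [x]
     = rec_nat (f x) (\<lambda>i a. g a i x) m" for m x
    by (induction m) (auto simp: precL_def)
  show ?thesis unfolding computable_rfk
    by (rule rfk_cong[OF r]) (auto simp: length_Suc_conv e)
qed

lemma c_sum[ci]:
  assumes g: "computable (\<lambda>p. g (pd1 p) (pd2 p))" and b: "computable b"
  shows "computable (\<lambda>x. \<Sum>i<b x. g i x)"
proof -
  have g2: "computable (\<lambda>p. g (pd1 (pd2 p)) (pd2 (pd2 p)))"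
    using c_comp[OF g c_pd2[OF c_id]] by simp
  have "computable (\<lambda>x. rec_nat 0 (\<lambda>i a. a + g i x) (b x))"
    by (rule c_prec[where g="\<lambda>a i x. a + g i x"]; intro ci g2 b)
  then show ?thesis by (simp add: rec_sum)
qed

lemma c_pow[ci]: "computable f \<Longrightarrow> computable g \<Longrightarrow> computable (\<lambda>x. f x ^ g x)"
proof -
  assume f: "computable f" and g: "computable g"
  have "computable (\<lambda>x. rec_nat 1 (\<lambda>i a. a * f x) (g x))"
    by (rule c_prec[where g="\<lambda>a i x. a * f x"]) (auto intro!: ci c_comp[OF f] g)
  moreover have "rec_nat 1 (\<lambda>i a. a * b) n = b ^ n" for b n :: nat by (induction n) auto
  ultimately show ?thesis by simp
qed

lemma div_as_sum: "(a::nat) div d = (\<Sum>j<a. if Suc j * d \<le> a then 1 else 0) * (if d = 0 then 0 else 1)"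
proof (cases "d = 0")
  case False
  have "(\<Sum>j<n. if Suc j * d \<le> a then 1 else 0::nat) = min n (a div d)" for n
  proof (induction n)
    case (Suc n)
    have "Suc n * d \<le> a \<longleftrightarrow> Suc n \<le> a div d" using False
      by (metis less_eq_div_iff_mult_less_eq mult.commute not_gr_zero)
    then show ?case using Suc by auto
  qed simp
  moreover have "a div d \<le> a" by simp
  ultimately show ?thesis using False by (simp add: min_absorb2)
qed simp

lemma c_div[ci]: "computable f \<Longrightarrow> computable g \<Longrightarrow> computable (\<lambda>x. f x div g x)"
proof -
  assume f: "computable f" and g: "computable g"
  have "computable (\<lambda>x. (\<Sum>j<f x. if Suc j * g x \<le> f x then 1 else 0) * (if g x = 0 then 0 else 1))"
    by (intro ci f g c_comp[OF f] c_comp[OF g])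
  then show ?thesis by (simp only: div_as_sum[symmetric])
qed

lemma c_mod[ci]: "computable f \<Longrightarrow> computable g \<Longrightarrow> computable (\<lambda>x. f x mod g x)"
proof -
  assume f: "computable f" and g: "computable g"
  have "computable (\<lambda>x. f x - g x * (f x div g x))"
    by (intro ci f g)
  then show ?thesis by (simp add: minus_mult_div_eq_mod)
qed


lemma c_app2: "computable (\<lambda>p. h (pd1 p) (pd2 p)) \<Longrightarrow> computable f \<Longrightarrow> computable g \<Longrightarrow>
   computable (\<lambda>x. h (f x) (g x))"
  using c_comp[of "\<lambda>p. h (pd1 p) (pd2 p)" "\<lambda>x. prod_encode (f x, g x)"] c_pe by simp

lemma c_app3: "computable (\<lambda>p. h (pd1 p) (pd1 (pd2 p)) (pd2 (pd2 p))) \<Longrightarrow> computable f \<Longrightarrow> computable g \<Longrightarrow> computable l \<Longrightarrow>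
   computable (\<lambda>x. h (f x) (g x) (l x))"
  using c_comp[of "\<lambda>p. h (pd1 p) (pd1 (pd2 p)) (pd2 (pd2 p))" "\<lambda>x. prod_encode (f x, prod_encode (g x, l x))"] c_pe by simp

lemma c_app4: "computable (\<lambda>p. h (pd1 p) (pd1 (pd2 p)) (pd1 (pd2 (pd2 p))) (pd2 (pd2 (pd2 p)))) \<Longrightarrow>
   computable f \<Longrightarrow> computable g \<Longrightarrow> computable l \<Longrightarrow> computable r \<Longrightarrow>
   computable (\<lambda>x. h (f x) (g x) (l x) (r x))"
  using c_comp[of "\<lambda>p. h (pd1 p) (pd1 (pd2 p)) (pd1 (pd2 (pd2 p))) (pd2 (pd2 (pd2 p)))"
     "\<lambda>x. prod_encode (f x, prod_encode (g x, prod_encode (l x, r x)))"] c_pe by simp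

definition tlc :: "nat \<Rightarrow> nat" where "tlc c = pd2 (c - 1)"
definition hdc :: "nat \<Rightarrow> nat" where "hdc c = pd1 (c - 1)"
definition tlk :: "nat \<Rightarrow> nat \<Rightarrow> nat" where "tlk c i = rec_nat c (\<lambda>j a. tlc a) i"
definition nthc :: "nat \<Rightarrow> nat \<Rightarrow> nat" where "nthc c i = hdc (tlk c i)"
definition bitn :: "nat \<Rightarrow> nat \<Rightarrow> nat" where "bitn m p = m div 2 ^ p mod 2"

lemma c_tlc[ci]: "computable f \<Longrightarrow> computable (\<lambda>x. tlc (f x))"
  unfolding tlc_def by (intro ci)
lemma c_hdc[ci]: "computable f \<Longrightarrow> computable (\<lambda>x. hdc (f x))"
  unfolding hdc_def by (intro ci)
lemma c_tlk[ci]: "computable f \<Longrightarrow> computable g \<Longrightarrow> computable (\<lambda>x. tlk (f x) (g x))"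
  unfolding tlk_def by (intro ci)
lemma c_nthc[ci]: "computable f \<Longrightarrow> computable g \<Longrightarrow> computable (\<lambda>x. nthc (f x) (g x))"
  unfolding nthc_def by (intro ci)
lemma c_bitn[ci]: "computable f \<Longrightarrow> computable g \<Longrightarrow> computable (\<lambda>x. bitn (f x) (g x))"
  unfolding bitn_def by (intro ci)

definition memf :: "nat \<Rightarrow> nat \<Rightarrow> nat" where
  "memf l q = (if (\<Sum>i<l. if tlk l i = 0 then 0 else if nthc l i = q then 1 else (0::nat)) = 0 then 0 else 1)"
definition maskL :: "nat \<Rightarrow> nat \<Rightarrow> nat" where
  "maskL N l = (\<Sum>q<N. 2 ^ q * memf l q)"
definition trf :: "nat \<Rightarrow> nat \<Rightarrow> nat \<Rightarrow> nat \<Rightarrow> nat" where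
  "trf D m a q = (if (\<Sum>i<D. if tlk D i = 0 then 0 else
       bitn m (pd1 (nthc D i)) * (if pd1 (pd2 (nthc D i)) = a then 1 else 0) *
       (if pd2 (pd2 (nthc D i)) = q then 1 else 0)) = 0 then 0 else 1)"
definition stepm :: "nat \<Rightarrow> nat \<Rightarrow> nat \<Rightarrow> nat \<Rightarrow> nat" where
  "stepm N D m a = (\<Sum>q<N. 2 ^ q * trf D m a q)"
definition finm :: "nat \<Rightarrow> nat \<Rightarrow> nat" where
  "finm Fl m = (if (\<Sum>i<Fl. if tlk Fl i = 0 then 0 else bitn m (nthc Fl i)) = 0 then 0 else 1)"

lemma c_memf[ci]: "computable f \<Longrightarrow> computable g \<Longrightarrow> computable (\<lambda>x. memf (f x) (g x))"
  by (rule c_app2) (unfold memf_def, intro ci)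
lemma c_maskL[ci]: "computable f \<Longrightarrow> computable g \<Longrightarrow> computable (\<lambda>x. maskL (f x) (g x))"
  by (rule c_app2) (unfold maskL_def, intro ci)
lemma c_trf[ci]: "computable f \<Longrightarrow> computable g \<Longrightarrow> computable l \<Longrightarrow> computable r \<Longrightarrow> computable (\<lambda>x. trf (f x) (g x) (l x) (r x))"
  by (rule c_app4) (unfold trf_def, intro ci)
lemma c_stepm[ci]: "computable f \<Longrightarrow> computable g \<Longrightarrow> computable l \<Longrightarrow> computable r \<Longrightarrow> computable (\<lambda>x. stepm (f x) (g x) (l x) (r x))"
  by (rule c_app4) (unfold stepm_def, intro ci)
lemma c_finm[ci]: "computable f \<Longrightarrow> computable g \<Longrightarrow> computable (\<lambda>x. finm (f x) (g x))"
  by (rule c_app2) (unfold finm_def, intro ci)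

text \<open>The fixed DFA: sync tracker and Sigma*Gamma* tracker.\<close>
definition sdS :: "nat \<Rightarrow> nat" where
  "sdS s = (if s = 0 then 1 else if s = 1 then 2 else if s = 2 then 2 else 4)"
definition sdG :: "nat \<Rightarrow> nat" where
  "sdG s = (if s = 0 then 3 else if s = 1 then 0 else if s = 3 then 3 else 4)"
definition tdS :: "nat \<Rightarrow> nat" where "tdS t = (if t = 0 then 0 else 2)"
definition tdG :: "nat \<Rightarrow> nat" where "tdG t = (if t = 2 then 2 else 1)"

lemma c_sdS[ci]: "computable f \<Longrightarrow> computable (\<lambda>x. sdS (f x))" unfolding sdS_def by (intro ci)
lemma c_sdG[ci]: "computable f \<Longrightarrow> computable (\<lambda>x. sdG (f x))" unfolding sdG_def by (intro ci)
lemma c_tdS[ci]: "computable f \<Longrightarrow> computable (\<lambda>x. tdS (f x))" unfolding tdS_def by (intro ci)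
lemma c_tdG[ci]: "computable f \<Longrightarrow> computable (\<lambda>x. tdG (f x))" unfolding tdG_def by (intro ci)

text \<open>n is the input code; K the number of letters, K1 the number of Sigma-letters.\<close>
definition ddelta :: "nat \<Rightarrow> nat \<Rightarrow> nat \<Rightarrow> nat \<Rightarrow> nat" where
  "ddelta K1 n st a = prod_encode (if a < K1 then sdS (pd1 st) else sdG (pd1 st),
      prod_encode (if a < K1 then tdS (pd1 (pd2 st)) else tdG (pd1 (pd2 st)),
      prod_encode (stepm n (pd1 (pd2 (pd1 n))) (pd1 (pd2 (pd2 st))) a,
                   stepm n (pd1 (pd2 (pd2 n))) (pd2 (pd2 (pd2 st))) a)))"

definition Bnd :: "nat \<Rightarrow> nat" where
  "Bnd n = Suc (prod_encode (4, prod_encode (2, prod_encode (2 ^ n, 2 ^ n))))"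

definition s0 :: "nat \<Rightarrow> nat" where
  "s0 n = prod_encode (0, prod_encode (0, prod_encode (maskL n (pd1 (pd1 n)), maskL n (pd1 (pd2 n)))))"

definition TL :: "nat \<Rightarrow> nat \<Rightarrow> nat \<Rightarrow> nat" where
  "TL K K1 n = rec_nat 0 (\<lambda>t a. Suc (prod_encode (prod_encode (t div K, prod_encode (t mod K, ddelta K1 n (t div K) (t mod K))), a))) (Bnd n * K)"

definition phiv :: "(nat \<Rightarrow> nat \<Rightarrow> nat \<Rightarrow> nat \<Rightarrow> nat) \<Rightarrow> nat \<Rightarrow> nat \<Rightarrow> nat" where
  "phiv \<Phi> n st = \<Phi> (pd1 st) (pd1 (pd2 st)) (finm (pd2 (pd2 (pd1 n))) (pd1 (pd2 (pd2 st))))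
                     (finm (pd2 (pd2 (pd2 n))) (pd2 (pd2 (pd2 st))))"

definition FL :: "(nat \<Rightarrow> nat \<Rightarrow> nat \<Rightarrow> nat \<Rightarrow> nat) \<Rightarrow> nat \<Rightarrow> nat" where
  "FL \<Phi> n = rec_nat 0 (\<lambda>t a. if phiv \<Phi> n t = 0 then a else Suc (prod_encode (t, a))) (Bnd n)"

definition encA :: "(nat \<Rightarrow> nat \<Rightarrow> nat \<Rightarrow> nat \<Rightarrow> nat) \<Rightarrow> nat \<Rightarrow> nat \<Rightarrow> nat \<Rightarrow> nat" where
  "encA \<Phi> K K1 n = prod_encode (Suc (prod_encode (s0 n, 0)), prod_encode (TL K K1 n, FL \<Phi> n))"

definition PhiS :: "nat \<Rightarrow> nat \<Rightarrow> nat \<Rightarrow> nat \<Rightarrow> nat" where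
  "PhiS ds dt f1 f2 = (if ds = 4 then 0 else if f2 = 0 then 1 else 0)"
definition PhiT :: "nat \<Rightarrow> nat \<Rightarrow> nat \<Rightarrow> nat \<Rightarrow> nat" where
  "PhiT ds dt f1 f2 = (if dt = 2 then (if ds = 4 then 0 else if f1 = 0 then (if f2 = 0 then 1 else 0) else 0) else 1)"
definition PhiX :: "nat \<Rightarrow> nat \<Rightarrow> nat \<Rightarrow> nat \<Rightarrow> nat" where
  "PhiX ds dt f1 f2 = (if ds = 4 then 0 else if f1 = 0 then (if f2 = 0 then 1 else 0) else 0)"

definition Fmain :: "nat \<Rightarrow> nat \<Rightarrow> nat \<Rightarrow> nat" where
  "Fmain K K1 n = prod_encode (encA PhiS K K1 n, encA PhiT K K1 n)"

lemma c_ddelta: "computable (\<lambda>p. ddelta K1 (pd1 p) (pd1 (pd2 p)) (pd2 (pd2 p)))"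
  unfolding ddelta_def by (intro ci)

lemma c_ddelta'[ci]: "computable f \<Longrightarrow> computable g \<Longrightarrow> computable l \<Longrightarrow> computable (\<lambda>x. ddelta K1 (f x) (g x) (l x))"
  by (rule c_app3[OF c_ddelta])

lemma c_Bnd[ci]: "computable f \<Longrightarrow> computable (\<lambda>x. Bnd (f x))" unfolding Bnd_def by (intro ci)
lemma c_s0[ci]: "computable f \<Longrightarrow> computable (\<lambda>x. s0 (f x))" unfolding s0_def by (intro ci)
lemma c_TL[ci]: "computable (TL K K1)" unfolding TL_def by (intro ci)

lemma c_phiv: "computable (\<lambda>p. \<Phi> (pd1 p) (pd1 (pd2 p)) (pd1 (pd2 (pd2 p))) (pd2 (pd2 (pd2 p)))) \<Longrightarrow>
   computable (\<lambda>p. phiv \<Phi> (pd1 p) (pd2 p))"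
  unfolding phiv_def by (rule c_app4[where h=\<Phi>]) (assumption | intro ci)+

lemma c_FL: "computable (\<lambda>p. \<Phi> (pd1 p) (pd1 (pd2 p)) (pd1 (pd2 (pd2 p))) (pd2 (pd2 (pd2 p)))) \<Longrightarrow>
   computable (FL \<Phi>)"
proof -
  assume h: "computable (\<lambda>p. \<Phi> (pd1 p) (pd1 (pd2 p)) (pd1 (pd2 (pd2 p))) (pd2 (pd2 (pd2 p))))"
  have phc: "computable (\<lambda>x. phiv \<Phi> (f x) (g x))" if "computable f" "computable g" for f g
    by (rule c_app2[OF c_phiv[OF h] that])
  show ?thesis unfolding FL_def by (intro ci phc)
qed

lemma c_Fmain: "computable (Fmain K K1)"
proof -
  have "computable (FL PhiS)" by (rule c_FL) (unfold PhiS_def, intro ci)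
  moreover have "computable (FL PhiT)" by (rule c_FL) (unfold PhiT_def, intro ci)
  ultimately show ?thesis unfolding Fmain_def encA_def
    using c_TL by (intro ci) (auto intro: c_comp[of "FL _", OF _ c_id, simplified] c_comp[of "TL _ _", OF _ c_id, simplified])
qed


lemma pd_0: "pd1 0 = 0" "pd2 0 = 0"
  by (simp_all add: pd1_def pd2_def prod_decode_def prod_decode_aux.simps)

lemma tlc_Suc[simp]: "tlc (Suc (prod_encode (a, b))) = b" by (simp add: tlc_def)
lemma hdc_Suc[simp]: "hdc (Suc (prod_encode (a, b))) = a" by (simp add: hdc_def)

lemma tlc_enc[simp]: "tlc (list_encode xs) = list_encode (tl xs)"
  by (cases xs) (auto simp: tlc_def pd_0)

lemma hdc_enc[simp]: "hdc (list_encode (x # xs)) = x"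
  by (simp add: hdc_def pd1_def)

lemma tlk_enc: "tlk (list_encode xs) i = list_encode (drop i xs)"
  by (induction i) (auto simp: tlk_def drop_Suc tl_drop)

lemma nthc_enc: "i < length xs \<Longrightarrow> nthc (list_encode xs) i = xs ! i"
  unfolding nthc_def tlk_enc by (simp add: Cons_nth_drop_Suc[symmetric])

lemma list_encode_0_iff: "list_encode xs = 0 \<longleftrightarrow> xs = []"
  by (cases xs) auto

lemma length_le_enc: "length xs \<le> list_encode xs"
proof (induction xs)
  case (Cons x xs)
  then show ?case using le_prod_encode_2[of "list_encode xs" x] by simp
qed simp

lemma mem_lt_enc: "x \<in> set xs \<Longrightarrow> x < list_encode xs"
proof (induction xs)
  case (Cons a xs)
  then show ?case using le_prod_encode_1[of a "list_encode xs"] le_prod_encode_2[of "list_encode xs" a]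
    by auto
qed simp

lemma sumL: "(\<Sum>i<list_encode xs. if tlk (list_encode xs) i = 0 then 0 else h (nthc (list_encode xs) i))
   = (\<Sum>i<length xs. (h (xs ! i) :: nat))"
proof -
  have "(\<Sum>i<list_encode xs. if tlk (list_encode xs) i = 0 then 0 else h (nthc (list_encode xs) i))
     = (\<Sum>i<length xs. if tlk (list_encode xs) i = 0 then 0 else h (nthc (list_encode xs) i))"
    by (rule sum.mono_neutral_right) (auto simp: tlk_enc list_encode_0_iff length_le_enc)
  also have "\<dots> = (\<Sum>i<length xs. h (xs ! i))"
    by (rule sum.cong) (auto simp: tlk_enc list_encode_0_iff nthc_enc)
  finally show ?thesis .
qed

lemma sum_len_0: "(\<Sum>i<length xs. (h (xs ! i) :: nat)) = 0 \<longleftrightarrow> (\<forall>x\<in>set xs. h x = 0)"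
  by (simp; metis in_set_conv_nth lessThan_iff)

lemma memf_enc: "memf (list_encode l) q = (if q \<in> set l then 1 else 0)"
  unfolding memf_def sumL[of l "\<lambda>e. if e = q then 1 else 0"] sum_len_0 by (auto simp: in_set_conv_nth)

definition msk :: "nat \<Rightarrow> nat set \<Rightarrow> nat" where
  "msk N X = (\<Sum>q<N. 2 ^ q * (if q \<in> X then 1 else 0))"

lemma maskL_enc: "maskL N (list_encode l) = msk N (set l)"
  unfolding maskL_def msk_def memf_enc ..

lemma msk_lt: "msk N X < 2 ^ N"
proof (induction N)
  case (Suc N)
  have "msk (Suc N) X \<le> msk N X + 2 ^ N" by (auto simp: msk_def)
  then show ?case using Suc by simp
qed (simp add: msk_def)

lemma bitn_msk: "bitn (msk N X) p = (if p < N \<and> p \<in> X then 1 else 0)"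
proof (induction N)
  case 0 then show ?case by (simp add: msk_def bitn_def)
next
  case (Suc N)
  define a where "a = msk N X"
  define c where "c = (if N \<in> X then 1 else 0 :: nat)"
  have eq: "msk (Suc N) X = a + c * 2 ^ N" by (simp add: msk_def a_def c_def)
  have alt: "a < 2 ^ N" using msk_lt a_def by simp
  have c01: "c \<le> 1" by (simp add: c_def)
  show ?case
  proof (cases "p < N")
    case True
    have "(2::nat) ^ N = 2 ^ p * 2 ^ (N - p)" using True by (simp add: power_add[symmetric])
    then have "(a + c * 2 ^ N) div 2 ^ p = a div 2 ^ p + c * 2 ^ (N - p)"
      by (simp add: div_add1_eq mult.left_commute)
    moreover have "even (c * 2 ^ (N - p) :: nat)" using True by simp
    ultimately have "bitn (a + c * 2 ^ N) p = bitn a p" unfolding bitn_def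
      by (metis mod_add_right_eq add.right_neutral even_iff_mod_2_eq_zero)
    then show ?thesis using Suc True eq a_def by simp
  next
    case False
    show ?thesis
    proof (cases "p = N")
      case True
      then have "(a + c * 2 ^ N) div 2 ^ p = c" using alt by simp
      then show ?thesis using True eq c01 by (auto simp: bitn_def c_def)
    next
      case F2: False
      then have "N < p" using False by simp
      then have "(2::nat) ^ Suc N \<le> 2 ^ p" by (intro power_increasing) auto
      moreover have "a + c * 2 ^ N < 2 ^ Suc N"
      proof -
        have "c * 2 ^ N \<le> (2::nat) ^ N" using c01 by simp
        then show ?thesis using alt by (simp only: power_Suc)
      qed
      ultimately have "(a + c * 2 ^ N) div 2 ^ p = 0" by simp
      then show ?thesis using eq False F2 by (simp add: bitn_def)
    qed
  qed
qed

definition tcode :: "nat \<times> nat \<times> nat \<Rightarrow> nat" where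
  "tcode t = (case t of (p, a, q) \<Rightarrow> prod_encode (p, prod_encode (a, q)))"

lemma bitn_01: "bitn m p = 0 \<or> bitn m p = 1"
  by (auto simp: bitn_def)

lemma bitn_ne0: "bitn m p \<noteq> 0 \<longleftrightarrow> bitn m p = 1"
  using bitn_01[of m p] by auto

lemma bitn_pos: "0 < bitn m p \<longleftrightarrow> bitn m p = 1"
  using bitn_01[of m p] by auto

lemma trf_enc: "trf (list_encode (map tcode Dl)) m a q =
   (if \<exists>(p, b, q') \<in> set Dl. bitn m p = 1 \<and> b = a \<and> q' = q then 1 else 0)"
proof -
  define H where "H e = bitn m (pd1 e) * (if pd1 (pd2 e) = a then 1 else 0) * (if pd2 (pd2 e) = q then 1 else (0::nat))" for e
  have t: "trf (list_encode (map tcode Dl)) m a q = (if (\<Sum>i<length (map tcode Dl). H (map tcode Dl ! i)) = 0 then 0 else 1)"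
    unfolding trf_def sumL[of _ H, unfolded H_def] H_def ..
  have z: "(\<Sum>i<length (map tcode Dl). H (map tcode Dl ! i)) = 0 \<longleftrightarrow> (\<forall>x\<in>set Dl. H (tcode x) = 0)"
    using sum_len_0[of H "map tcode Dl"] by simp
  have h: "H (tcode (p,b,q')) = 0 \<longleftrightarrow> \<not>(bitn m p = 1 \<and> b = a \<and> q' = q)" for p b q'
    using bitn_01[of m p] by (auto simp: H_def tcode_def)
  have e: "(\<forall>x\<in>set Dl. H (tcode x) = 0) \<longleftrightarrow> \<not>(\<exists>(p, b, q')\<in>set Dl. bitn m p = 1 \<and> b = a \<and> q' = q)"
  proof
    assume A: "\<forall>x\<in>set Dl. H (tcode x) = 0"
    show "\<not>(\<exists>(p, b, q')\<in>set Dl. bitn m p = 1 \<and> b = a \<and> q' = q)"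
    proof
      assume "\<exists>(p, b, q')\<in>set Dl. bitn m p = 1 \<and> b = a \<and> q' = q"
      then obtain p b q' where m: "(p, b, q') \<in> set Dl" and c: "bitn m p = 1 \<and> b = a \<and> q' = q" by auto
      from A m have "H (tcode (p, b, q')) = 0" by (rule bspec)
      then show False using c h[of p b q'] by simp
    qed
  next
    assume B: "\<not>(\<exists>(p, b, q')\<in>set Dl. bitn m p = 1 \<and> b = a \<and> q' = q)"
    show "\<forall>x\<in>set Dl. H (tcode x) = 0"
    proof
      fix x assume x: "x \<in> set Dl"
      obtain p b q' where xe: "x = (p, b, q')" by (cases x)
      have "\<not>(bitn m p = 1 \<and> b = a \<and> q' = q)" using B x xe by auto
      then show "H (tcode x) = 0" using xe h[of p b q'] by simp
    qed
  qed
  show ?thesis unfolding t z e by simp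
qed

lemma stepm_enc: "stepm N (list_encode (map tcode Dl)) (msk N X) a =
   msk N {q. \<exists>p. p < N \<and> p \<in> X \<and> (p, a, q) \<in> set Dl}"
  unfolding stepm_def trf_enc bitn_msk unfolding msk_def
  by (rule sum.cong) (auto split: if_splits)

lemma finm_enc: "finm (list_encode Fl) m = (if \<exists>q\<in>set Fl. bitn m q = 1 then 1 else 0)"
  unfolding finm_def sumL[of Fl "\<lambda>e. bitn m e"] sum_len_0 by (auto simp: bitn_pos)


lemma takeWhile_idx: "distinct xs \<Longrightarrow> x \<in> set xs \<Longrightarrow>
   length (takeWhile (\<lambda>y. y \<noteq> x) xs) < length xs \<and> xs ! length (takeWhile (\<lambda>y. y \<noteq> x) xs) = x"
  by (induction xs) auto

lemma takeWhile_nth: "distinct xs \<Longrightarrow> i < length xs \<Longrightarrow> length (takeWhile (\<lambda>y. y \<noteq> xs ! i) xs) = i"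
proof (induction xs arbitrary: i)
  case (Cons a xs)
  then show ?case by (cases i) (auto simp: nth_mem)
qed simp

lemma letter_idx_lt: "letter_idx (x::'c::enum) < length (enum_class.enum :: 'c list)"
  unfolding letter_idx_def using takeWhile_idx[OF enum_distinct, of x] by (simp add: UNIV_enum[symmetric])

lemma enum_letter_idx: "(enum_class.enum :: 'c::enum list) ! letter_idx (x::'c) = x"
  unfolding letter_idx_def using takeWhile_idx[OF enum_distinct, of x] by (simp add: UNIV_enum[symmetric])

lemma letter_idx_enum: "a < length (enum_class.enum :: 'c::enum list) \<Longrightarrow> letter_idx ((enum_class.enum :: 'c list) ! a) = a"
  unfolding letter_idx_def by (intro takeWhile_nth) (simp_all add: enum_distinct)

lemma letter_idx_inj: "letter_idx (x::'c::enum) = letter_idx y \<longleftrightarrow> x = y"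
  by (metis enum_letter_idx)

lemma letter_idx_isl: "letter_idx (x::'s::enum + 'g::enum) < length (enum_class.enum :: 's list) \<longleftrightarrow> isl x"
proof -
  let ?i = "letter_idx x"
  have e: "(enum_class.enum :: ('s + 'g) list) = map Inl enum_class.enum @ map Inr enum_class.enum"
    by (simp add: enum_sum_def)
  have lt: "?i < length (enum_class.enum :: ('s + 'g) list)" by (rule letter_idx_lt)
  have x: "(enum_class.enum :: ('s + 'g) list) ! ?i = x" by (rule enum_letter_idx)
  show ?thesis
  proof (cases "?i < length (enum_class.enum :: 's list)")
    case True
    then have "x = Inl ((enum_class.enum :: 's list) ! ?i)" using x unfolding e by (simp add: nth_append)
    then have "isl x" by (metis sum.disc(1))
    then show ?thesis using True by simp
  next
    case False
    then have "x = Inr ((enum_class.enum :: 'g list) ! (?i - length (enum_class.enum :: 's list)))"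
      using x lt unfolding e by (simp add: nth_append)
    then have "\<not> isl x" by (metis sum.disc(2))
    then show ?thesis using False by simp
  qed
qed

lemma enum_nonempty: "0 < length (enum_class.enum :: 'c::enum list)"
  by (metis UNIV_enum UNIV_not_empty length_greater_0_conv set_empty)

definition Aut :: "(nat \<Rightarrow> nat \<Rightarrow> nat \<Rightarrow> nat \<Rightarrow> nat) \<Rightarrow> nat \<Rightarrow> nat \<Rightarrow> nat \<Rightarrow> ('s::enum + 'g::enum) nfa" where
  "Aut \<Phi> K K1 n = ([s0 n],
     map (\<lambda>t. (t div K, enum_class.enum ! (t mod K), ddelta K1 n (t div K) (t mod K))) (rev [0..<Bnd n * K]),
     filter (\<lambda>t. phiv \<Phi> n t \<noteq> 0) (rev [0..<Bnd n]))"

lemma enc_map_rev: "list_encode (map f (rev [0..<m])) = rec_nat 0 (\<lambda>t a. Suc (prod_encode (f t, a))) m"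
  by (induction m) auto

lemma enc_filter_rev: "list_encode (filter P (rev [0..<m])) = rec_nat 0 (\<lambda>t a. if \<not> P t then a else Suc (prod_encode (t, a))) m"
  by (induction m) auto

lemma enc_Aut:
  assumes K: "K = length (enum_class.enum :: ('s::enum + 'g::enum) list)"
  shows "enc_nfa (Aut \<Phi> K K1 n :: ('s + 'g) nfa) = encA \<Phi> K K1 n"
proof -
  have Kp: "0 < K" using K enum_nonempty by metis
  have "(\<lambda>(p, c, q). prod_encode (p, prod_encode (letter_idx c, q))) \<circ>
        (\<lambda>t. (t div K, (enum_class.enum :: ('s + 'g) list) ! (t mod K), ddelta K1 n (t div K) (t mod K)))
      = (\<lambda>t. prod_encode (t div K, prod_encode (t mod K, ddelta K1 n (t div K) (t mod K))))"
    using letter_idx_enum[of "_ mod K", where 'c="'s+'g"] K Kp by (auto simp: fun_eq_iff)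
  then show ?thesis
    unfolding Aut_def encA_def TL_def FL_def
    by (simp add: enc_map_rev enc_filter_rev del: rev_map)
qed

lemma trans_Aut:
  assumes K: "K = length (enum_class.enum :: ('s::enum + 'g::enum) list)"
  shows "(s, x, s') \<in> nfa_trans (Aut \<Phi> K K1 n :: ('s + 'g) nfa) \<longleftrightarrow>
    s < Bnd n \<and> s' = ddelta K1 n s (letter_idx x)"
proof -
  have Kp: "0 < K" using K enum_nonempty by metis
  show ?thesis
  proof
    assume "(s, x, s') \<in> nfa_trans (Aut \<Phi> K K1 n :: ('s + 'g) nfa)"
    then obtain t where t: "t < Bnd n * K" "s = t div K" "x = (enum_class.enum :: ('s + 'g) list) ! (t mod K)"
      "s' = ddelta K1 n (t div K) (t mod K)"
      unfolding Aut_def by auto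
    have "letter_idx x = t mod K" using t(3) letter_idx_enum[of "t mod K", where 'c="'s+'g"] K Kp by simp
    moreover have "s < Bnd n" using t(1,2) Kp by (simp add: less_mult_imp_div_less)
    ultimately show "s < Bnd n \<and> s' = ddelta K1 n s (letter_idx x)" using t by simp
  next
    assume a: "s < Bnd n \<and> s' = ddelta K1 n s (letter_idx x)"
    define t where "t = s * K + letter_idx x"
    have li: "letter_idx x < K" using K letter_idx_lt by metis
    have "t < Bnd n * K"
    proof -
      have "t < s * K + K" using li t_def by simp
      also have "\<dots> = Suc s * K" by simp
      also have "\<dots> \<le> Bnd n * K" using a by (intro mult_le_mono1) simp
      finally show ?thesis .
    qed
    moreover have "t div K = s" "t mod K = letter_idx x" using li t_def by auto
    moreover have "(enum_class.enum :: ('s + 'g) list) ! letter_idx x = x" by (rule enum_letter_idx)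
    ultimately show "(s, x, s') \<in> nfa_trans (Aut \<Phi> K K1 n :: ('s + 'g) nfa)"
      unfolding Aut_def using a by (auto intro!: image_eqI[where x=t])
  qed
qed

lemma final_Aut: "s \<in> nfa_final (Aut \<Phi> K K1 n) \<longleftrightarrow> s < Bnd n \<and> phiv \<Phi> n s \<noteq> 0"
  unfolding Aut_def by auto

lemma init_Aut: "nfa_init (Aut \<Phi> K K1 n) = {s0 n}"
  unfolding Aut_def by auto


lemma pe_mono: "a \<le> a' \<Longrightarrow> b \<le> b' \<Longrightarrow> prod_encode (a, b) \<le> prod_encode (a', b')"
  unfolding prod_encode_def using triangle_mono[of "a + b" "a' + b'"] by simp

lemma stepm_msk: "stepm N D m a = msk N {q. trf D m a q \<noteq> 0}"
  unfolding stepm_def msk_def by (rule sum.cong) (auto simp: trf_def)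

lemma maskL_msk: "maskL N l = msk N {q. memf l q \<noteq> 0}"
  unfolding maskL_def msk_def by (rule sum.cong) (auto simp: memf_def)

definition Good :: "nat \<Rightarrow> nat \<Rightarrow> bool" where
  "Good n s \<longleftrightarrow> pd1 s \<le> 4 \<and> pd1 (pd2 s) \<le> 2 \<and> pd1 (pd2 (pd2 s)) < 2 ^ n \<and> pd2 (pd2 (pd2 s)) < 2 ^ n"

lemma pe_decomp: "s = prod_encode (pd1 s, prod_encode (pd1 (pd2 s), prod_encode (pd1 (pd2 (pd2 s)), pd2 (pd2 (pd2 s)))))"
  by (simp add: pd1_def pd2_def)

lemma Good_Bnd: "Good n s \<Longrightarrow> s < Bnd n"
proof -
  assume g: "Good n s"
  have "s \<le> prod_encode (4, prod_encode (2, prod_encode (2 ^ n, 2 ^ n)))"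
    apply (subst pe_decomp)
    using g unfolding Good_def by (intro pe_mono) auto
  then show ?thesis by (simp add: Bnd_def)
qed

lemma sd_le: "sdS s \<le> 4" "sdG s \<le> 4" "tdS t \<le> 2" "tdG t \<le> 2"
  by (auto simp: sdS_def sdG_def tdS_def tdG_def)

lemma Good_ddelta: "Good n (ddelta K1 n s a)"
  unfolding Good_def ddelta_def by (simp add: sd_le stepm_msk msk_lt)

lemma Good_s0: "Good n (s0 n)"
  unfolding Good_def s0_def by (simp add: maskL_msk msk_lt)

lemma reach_Aut:
  assumes K: "K = length (enum_class.enum :: ('s::enum + 'g::enum) list)" and g: "Good n s"
  shows "reach (Aut \<Phi> K K1 n :: ('s + 'g) nfa) s w s' \<longleftrightarrow> s' = fold (\<lambda>x s. ddelta K1 n s (letter_idx x)) w s"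
  using g
proof (induction w arbitrary: s)
  case (Cons x w)
  have "s < Bnd n" using Cons.prems Good_Bnd by blast
  then show ?case using Cons.IH[OF Good_ddelta] trans_Aut[OF K] by auto
qed auto

lemma lang_Aut_fold:
  assumes K: "K = length (enum_class.enum :: ('s::enum + 'g::enum) list)"
  shows "lang (Aut \<Phi> K K1 n :: ('s + 'g) nfa) = {w. phiv \<Phi> n (fold (\<lambda>x s. ddelta K1 n s (letter_idx x)) w (s0 n)) \<noteq> 0}"
proof -
  have g: "Good n (fold (\<lambda>x s. ddelta K1 n s (letter_idx x)) w (s0 n))" for w
    by (cases w rule: rev_cases) (auto simp: Good_s0 Good_ddelta)
  show ?thesis
  proof (rule set_eqI)
    fix w
    have r: "reach (Aut \<Phi> K K1 n :: ('s + 'g) nfa) (s0 n) w q \<longleftrightarrow> q = fold (\<lambda>x s. ddelta K1 n s (letter_idx x)) w (s0 n)" for q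
      by (rule reach_Aut[OF K Good_s0])
    show "w \<in> lang (Aut \<Phi> K K1 n :: ('s + 'g) nfa) \<longleftrightarrow> w \<in> {w. phiv \<Phi> n (fold (\<lambda>x s. ddelta K1 n s (letter_idx x)) w (s0 n)) \<noteq> 0}"
      unfolding lang_def init_Aut final_Aut using Good_Bnd[OF g] by (auto simp: r final_Aut)
  qed
qed

section \<open>Decoding the input automata\<close>

definition lcode :: "nat \<times> 'c::enum \<times> nat \<Rightarrow> nat \<times> nat \<times> nat" where
  "lcode t = (case t of (p, c, q) \<Rightarrow> (p, letter_idx c, q))"

lemma enc_nfa_eq: "enc_nfa (I, D, F) = prod_encode (list_encode I, prod_encode (list_encode (map tcode (map lcode D)), list_encode F))"
proof -
  have eq: "(\<lambda>(p, c, q). prod_encode (p, prod_encode (letter_idx c, q))) = tcode \<circ> lcode"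
    by (auto simp: fun_eq_iff tcode_def lcode_def)
  show ?thesis unfolding enc_nfa.simps map_map eq ..
qed

lemma lcode_mem: "(p, letter_idx x, q) \<in> lcode ` S \<longleftrightarrow> (p, x, q) \<in> S"
proof
  assume "(p, letter_idx x, q) \<in> lcode ` S"
  then obtain t where t: "t \<in> S" "lcode t = (p, letter_idx x, q)" by auto
  obtain p' c q' where "t = (p', c, q')" by (cases t)
  then show "(p, x, q) \<in> S" using t by (auto simp: lcode_def letter_idx_inj)
next
  assume "(p, x, q) \<in> S"
  then show "(p, letter_idx x, q) \<in> lcode ` S" by (force simp: lcode_def)
qed

definition post :: "'c nfa \<Rightarrow> nat set \<Rightarrow> 'c \<Rightarrow> nat set" where
  "post A X x = {q. \<exists>p\<in>X. (p, x, q) \<in> nfa_trans A}"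

definition posts :: "'c nfa \<Rightarrow> nat set \<Rightarrow> 'c list \<Rightarrow> nat set" where
  "posts A X w = fold (\<lambda>x X. post A X x) w X"

lemma posts_reach: "posts A X w = {q. \<exists>p\<in>X. reach A p w q}"
proof (induction w arbitrary: X)
  case Nil then show ?case by (simp add: posts_def)
next
  case (Cons x w)
  have "posts A X (x # w) = posts A (post A X x) w" by (simp add: posts_def)
  then show ?case using Cons by (auto simp: post_def)
qed

lemma states_lt:
  assumes "enc_nfa A \<le> n"
  shows "p \<in> nfa_init A \<Longrightarrow> p < n"
    and "(p, c, q) \<in> nfa_trans A \<Longrightarrow> p < n \<and> q < n"
    and "q \<in> nfa_final A \<Longrightarrow> q < n"
proof -
  obtain I D F where A: "A = (I, D, F)" by (cases A)
  have e: "prod_encode (list_encode I, prod_encode (list_encode (map tcode (map lcode D)), list_encode F)) \<le> n"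
    using assms unfolding A enc_nfa_eq .
  have eI: "list_encode I \<le> n" using le_trans[OF le_prod_encode_1 e] .
  have eD: "list_encode (map tcode (map lcode D)) \<le> n" using le_trans[OF le_trans[OF le_prod_encode_1 le_prod_encode_2] e] .
  have eF: "list_encode F \<le> n" using le_trans[OF le_trans[OF le_prod_encode_2 le_prod_encode_2] e] .
  show "p \<in> nfa_init A \<Longrightarrow> p < n" using mem_lt_enc[of p I] eI A by auto
  show "q \<in> nfa_final A \<Longrightarrow> q < n" using mem_lt_enc[of q F] eF A by auto
  assume "(p, c, q) \<in> nfa_trans A"
  then have "tcode (p, letter_idx c, q) \<in> set (map tcode (map lcode D))"
    using A by (force simp: lcode_def)
  then have "tcode (p, letter_idx c, q) < n" using mem_lt_enc eD by (meson less_le_trans)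
  moreover have "p \<le> tcode (p, letter_idx c, q)" unfolding tcode_def by (simp add: le_prod_encode_1)
  moreover have "q \<le> tcode (p, letter_idx c, q)" unfolding tcode_def
    using le_trans[OF le_prod_encode_2 le_prod_encode_2] by simp
  ultimately show "p < n \<and> q < n" by linarith
qed

lemma stepm_A:
  assumes "enc_nfa A \<le> n"
  shows "stepm n (pd1 (pd2 (enc_nfa A))) (msk n X) (letter_idx x) = msk n (post A X x)"
proof -
  obtain I D F where A: "A = (I, D, F)" by (cases A)
  have "{q. \<exists>p. p < n \<and> p \<in> X \<and> (p, letter_idx x, q) \<in> set (map lcode D)} = post A X x"
    using states_lt(2)[OF assms] unfolding A post_def by (auto simp: lcode_mem)
  then show ?thesis unfolding A enc_nfa_eq pd1_pe pd2_pe stepm_enc by simp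
qed

lemma maskL_A: "maskL n (pd1 (enc_nfa A)) = msk n (nfa_init A)"
  by (cases A) (simp add: enc_nfa_eq maskL_enc)

lemma finm_A:
  assumes "enc_nfa A \<le> n"
  shows "finm (pd2 (pd2 (enc_nfa A))) (msk n X) = (if \<exists>q\<in>nfa_final A. q \<in> X then 1 else 0)"
proof -
  obtain I D F where A: "A = (I, D, F)" by (cases A)
  show ?thesis using states_lt(3)[OF assms] unfolding A by (auto simp: enc_nfa_eq finm_enc bitn_msk)
qed

definition sd :: "('s + 'g) \<Rightarrow> nat \<Rightarrow> nat" where "sd x s = (if isl x then sdS s else sdG s)"
definition td :: "('s + 'g) \<Rightarrow> nat \<Rightarrow> nat" where "td x s = (if isl x then tdS s else tdG s)"

lemma fold_run:
  assumes K1: "K1 = length (enum_class.enum :: 's::enum list)"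
    and n: "n = prod_encode (enc_nfa (A1 :: ('s + 'g::enum) nfa), enc_nfa (A2 :: ('s + 'g) nfa))"
  shows "fold (\<lambda>x s. ddelta K1 n s (letter_idx x)) w (prod_encode (s, prod_encode (t, prod_encode (msk n X, msk n Y))))
    = prod_encode (fold sd w s, prod_encode (fold td w t, prod_encode (msk n (posts A1 X w), msk n (posts A2 Y w))))"
proof (induction w arbitrary: s t X Y)
  case Nil then show ?case by (simp add: posts_def)
next
  case (Cons x w)
  have l1: "enc_nfa A1 \<le> n" "enc_nfa A2 \<le> n" using n le_prod_encode_1 le_prod_encode_2 by auto
  have "ddelta K1 n (prod_encode (s, prod_encode (t, prod_encode (msk n X, msk n Y)))) (letter_idx x)
     = prod_encode (sd x s, prod_encode (td x t, prod_encode (msk n (post A1 X x), msk n (post A2 Y x))))"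
    unfolding ddelta_def using stepm_A[OF l1(1)] stepm_A[OF l1(2)] letter_idx_isl[of x] K1 n
    by (simp add: sd_def td_def)
  then show ?case using Cons by (simp add: posts_def)
qed

theorem lang_Aut:
  assumes K: "K = length (enum_class.enum :: ('s::enum + 'g::enum) list)"
    and K1: "K1 = length (enum_class.enum :: 's list)"
    and n: "n = prod_encode (enc_nfa (A1 :: ('s + 'g) nfa), enc_nfa (A2 :: ('s + 'g) nfa))"
  shows "lang (Aut \<Phi> K K1 n :: ('s + 'g) nfa) =
     {w. \<Phi> (fold sd w 0) (fold td w 0) (if w \<in> lang A1 then 1 else 0) (if w \<in> lang A2 then 1 else 0) \<noteq> 0}"
proof -
  have l1: "enc_nfa A1 \<le> n" "enc_nfa A2 \<le> n" using n le_prod_encode_1 le_prod_encode_2 by auto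
  have s0: "s0 n = prod_encode (0, prod_encode (0, prod_encode (msk n (nfa_init A1), msk n (nfa_init A2))))"
    unfolding s0_def using n by (simp add: maskL_A)
  have f1: "finm (pd2 (pd2 (pd1 n))) (msk n (posts A1 (nfa_init A1) w)) = (if w \<in> lang A1 then 1 else 0)" for w
    using finm_A[OF l1(1)] n by (auto simp: posts_reach lang_def)
  have f2: "finm (pd2 (pd2 (pd2 n))) (msk n (posts A2 (nfa_init A2) w)) = (if w \<in> lang A2 then 1 else 0)" for w
    using finm_A[OF l1(2)] n by (auto simp: posts_reach lang_def)
  show ?thesis unfolding lang_Aut_fold[OF K] s0 fold_run[OF K1 n] phiv_def
    by (simp add: f1 f2)
qed


abbreviation allL :: "('s + 'g) list \<Rightarrow> bool" where "allL w \<equiv> (\<forall>x\<in>set w. isl x)"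
abbreviation allR :: "('s + 'g) list \<Rightarrow> bool" where "allR w \<equiv> (\<forall>x\<in>set w. \<not> isl x)"

fun issync :: "('s + 'g) list \<Rightarrow> bool" where
  "issync [] = True"
| "issync (Inl a # Inr b # w) = issync w"
| "issync w = (allL w \<or> allR w)"

lemma issync_Inl: "issync (Inl a # w) \<longleftrightarrow> allL w \<or> (\<exists>b w'. w = Inr b # w' \<and> issync w')"
proof (cases w)
  case (Cons x w')
  then show ?thesis by (cases x) auto
qed simp

lemma issync_Inr: "issync (Inr b # w) \<longleftrightarrow> allR w"
  by simp

lemma fold_sd_le: "s \<le> 4 \<Longrightarrow> fold sd w s \<le> 4"
  by (induction w arbitrary: s) (auto simp: sd_def sd_le)

lemma fold_sd:
  "s \<le> 4 \<Longrightarrow> fold sd w s \<noteq> 4 \<longleftrightarrow>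
    (s = 0 \<and> issync w) \<or> (s = 1 \<and> (allL w \<or> (\<exists>b w'. w = Inr b # w' \<and> issync w'))) \<or>
    (s = 2 \<and> allL w) \<or> (s = 3 \<and> allR w)"
proof (induction w arbitrary: s)
  case Nil then show ?case by auto
next
  case (Cons x w)
  have le: "sd x s \<le> 4" by (auto simp: sd_def sd_le)
  have "fold sd (x # w) s = fold sd w (sd x s)" by simp
  then have IH: "fold sd (x # w) s \<noteq> 4 \<longleftrightarrow> (sd x s = 0 \<and> issync w) \<or> (sd x s = 1 \<and> (allL w \<or> (\<exists>b w'. w = Inr b # w' \<and> issync w'))) \<or>
    (sd x s = 2 \<and> allL w) \<or> (sd x s = 3 \<and> allR w)" using Cons.IH[OF le] by simp
  have s: "s = 0 \<or> s = 1 \<or> s = 2 \<or> s = 3 \<or> s = 4" using Cons.prems by arith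
  show ?case
  proof (cases x)
    case (Inl a)
    show ?thesis unfolding IH using s by (auto simp: Inl sd_def sdS_def issync_Inl)
  next
    case (Inr b)
    show ?thesis unfolding IH using s by (auto simp: Inr sd_def sdG_def issync_Inl)
  qed
qed

lemma fold_sd0: "fold sd w 0 \<noteq> 4 \<longleftrightarrow> issync w"
  using fold_sd[of 0 w] by simp

fun sgw :: "('s + 'g) list \<Rightarrow> bool" where
  "sgw [] = True"
| "sgw (Inl a # w) = sgw w"
| "sgw (Inr b # w) = allR w"

lemma fold_td:
  "t \<le> 2 \<Longrightarrow> fold td w t \<noteq> 2 \<longleftrightarrow> (t = 0 \<and> sgw w) \<or> (t = 1 \<and> allR w)"
proof (induction w arbitrary: t)
  case Nil then show ?case by auto
next
  case (Cons x w)
  have le: "td x t \<le> 2" by (auto simp: td_def sd_le)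
  have "fold td (x # w) t = fold td w (td x t)" by simp
  then have IH: "fold td (x # w) t \<noteq> 2 \<longleftrightarrow> (td x t = 0 \<and> sgw w) \<or> (td x t = 1 \<and> allR w)"
    using Cons.IH[OF le] by simp
  have s: "t = 0 \<or> t = 1 \<or> t = 2" using Cons.prems by arith
  show ?case
  proof (cases x)
    case (Inl a)
    show ?thesis unfolding IH using s by (auto simp: Inl td_def tdS_def)
  next
    case (Inr b)
    show ?thesis unfolding IH using s by (auto simp: Inr td_def tdG_def)
  qed
qed

lemma fold_td0: "fold td w 0 \<noteq> 2 \<longleftrightarrow> sgw w"
  using fold_td[of 0 w] by simp

lemma allL_map: "allL w \<Longrightarrow> map Inl (map projl w) = w"
  by (induction w) (simp_all add: sum.collapse)
lemma allR_map: "allR w \<Longrightarrow> map Inr (map projr w) = w"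
  by (induction w) (simp_all add: sum.collapse)

lemma sgw_iff: "sgw w \<longleftrightarrow> (\<exists>u v. w = map Inl u @ map Inr v)"
proof (induction w rule: sgw.induct)
  case (2 a w)
  show ?case
  proof
    assume "sgw (Inl a # w)"
    then obtain u v where "w = map Inl u @ map Inr v" using 2 by auto
    then show "\<exists>u v. Inl a # w = map Inl u @ map Inr v" by (intro exI[of _ "a # u"] exI[of _ v]) simp
  next
    assume "\<exists>u v. Inl a # w = map Inl u @ map Inr v"
    then obtain u v where e: "Inl a # w = map Inl u @ map Inr v" by blast
    then obtain u' where "u = a # u'" by (cases u) auto
    then show "sgw (Inl a # w)" using e 2 by auto
  qed
next
  case (3 b w)
  show ?case
  proof
    assume "sgw (Inr b # w)"
    then have "allR w" by simp
    then have "w = map Inr (map projr w)" using allR_map by metis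
    then show "\<exists>u v. Inr b # w = map Inl u @ map Inr v"
      by (intro exI[of _ "[]"] exI[of _ "b # map projr w"]) simp
  next
    assume "\<exists>u v. Inr b # w = map Inl u @ map Inr v"
    then obtain u v where e: "Inr b # w = map Inl u @ map Inr v" by blast
    then have "u = []" by (cases u) auto
    then show "sgw (Inr b # w)" using e by auto
  qed
qed simp

section \<open>Sync words\<close>

lemma allLR_issync: "allL w \<or> allR w \<Longrightarrow> issync w"
  by (induction w rule: issync.induct) auto

lemma pi_simps[simp]:
  "pi_i [] = []" "pi_o [] = []"
  "pi_i (Inl a # w) = a # pi_i w" "pi_o (Inl a # w) = pi_o w"
  "pi_i (Inr b # w) = pi_i w" "pi_o (Inr b # w) = b # pi_o w"
  by (simp_all add: pi_i_def pi_o_def)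

lemma pi_append[simp]: "pi_i (u @ v) = pi_i u @ pi_i v" "pi_o (u @ v) = pi_o u @ pi_o v"
  by (simp_all add: pi_i_def pi_o_def)

lemma pi_mapL[simp]: "pi_i (map Inl u) = u" "pi_o (map Inl u) = []"
  by (induction u) auto
lemma pi_mapR[simp]: "pi_i (map Inr u) = []" "pi_o (map Inr u) = u"
  by (induction u) auto

fun syn :: "'s list \<Rightarrow> 'g list \<Rightarrow> ('s + 'g) list" where
  "syn (a # u) (b # v) = Inl a # Inr b # syn u v"
| "syn u [] = map Inl u"
| "syn [] v = map Inr v"

lemma syn_Nil: "syn [] v = map Inr v"
  by (cases v) auto

lemma sem_syn: "pi_i (syn u v) = u \<and> pi_o (syn u v) = v"
  by (induction u v rule: syn.induct) auto

lemma issync_syn: "issync (syn u v)"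
  by (induction u v rule: syn.induct) (auto simp: allLR_issync)

lemma syn_sync: "syn u v \<in> sync_words"
proof (induction u v rule: syn.induct)
  case (1 a u b v)
  then obtain u' v' where "syn u v = concat (map (\<lambda>(a, b). [Inl a, Inr b]) u') @ v'"
      "v' \<in> lists (range Inl) \<or> v' \<in> lists (range Inr)"
      unfolding sync_words_def by auto
  then show ?case unfolding sync_words_def
    by (intro CollectI exI[of _ "(a, b) # u'"] exI[of _ v']) auto
next
  case (2 u)
  then show ?case unfolding sync_words_def
    by (intro CollectI exI[of _ "[]"] exI[of _ "map Inl u"]) auto
next
  case (3 b v)
  then show ?case unfolding sync_words_def
    by (intro CollectI exI[of _ "[]"] exI[of _ "map Inr (b # v)"]) auto
qed


lemma pi_allL: "allL w \<Longrightarrow> pi_o w = [] \<and> pi_i w = map projl w"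
  by (simp add: pi_o_def pi_i_def)
lemma pi_allR: "allR w \<Longrightarrow> pi_i w = [] \<and> pi_o w = map projr w"
  by (simp add: pi_o_def pi_i_def filter_id_conv)

lemma syn_allL: "allL w \<Longrightarrow> syn (pi_i w) (pi_o w) = w"
  using pi_allL[of w] allL_map[of w] by simp

lemma syn_allR: "allR w \<Longrightarrow> syn (pi_i w) (pi_o w) = w"
  by (subst pi_allR[THEN conjunct1], assumption, subst pi_allR[THEN conjunct2], assumption)
     (simp only: syn_Nil allR_map)

lemma syn_pi: "issync w \<Longrightarrow> syn (pi_i w) (pi_o w) = w"
  apply (induction w rule: issync.induct)
  apply simp
  apply simp
  apply (simp only: issync.simps; metis syn_allL syn_allR)+
  done

lemma issync_sync: "issync w \<longleftrightarrow> w \<in> sync_words"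
proof
  assume "issync w"
  then show "w \<in> sync_words" using syn_sync syn_pi by metis
next
  assume "w \<in> sync_words"
  then obtain u v where w: "w = concat (map (\<lambda>(a, b). [Inl a, Inr b]) u) @ v"
      and v: "v \<in> lists (range Inl) \<or> v \<in> lists (range Inr)"
    unfolding sync_words_def by auto
  have "issync v" using v by (intro allLR_issync) auto
  then show "issync w" unfolding w by (induction u) auto
qed

lemma sem_inj_sync: "issync w \<Longrightarrow> issync w' \<Longrightarrow> sem w = sem w' \<Longrightarrow> w = w'"
  by (metis sem_def syn_pi prod.inject)

lemma sem_syn'[simp]: "sem (syn u v) = (u, v)"
  using sem_syn by (simp add: sem_def)

lemma sem_LR[simp]: "sem (map Inl u @ map Inr v) = (u, v)"
  by (simp add: sem_def)

section \<open>Shiftlag\<close>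

lemma lag_shift2: "lag (Inl a # Inr b # w) (i + 2) = lag w i"
  by (simp add: lag_def)

lemma allLR_noshift: "allL w \<or> allR w \<Longrightarrow> \<not> is_shift w i"
proof
  assume a: "allL w \<or> allR w" and sh: "is_shift w i"
  then have "i < length w" "i - 1 < length w" by (auto simp: is_shift_def)
  then have "w ! i \<in> set w" "w ! (i - 1) \<in> set w" by simp_all
  then show False using a sh unfolding is_shift_def by auto
qed

lemma issync_lag2:
  assumes IH: "\<And>i. is_shift w i \<Longrightarrow> lag w i \<le> 1" and sh: "is_shift (Inl a # Inr b # w) i"
  shows "lag (Inl a # Inr b # w) i \<le> 1"
proof (cases "i \<le> 2")
  case True
  then have "i = 1 \<or> i = 2" using sh by (auto simp: is_shift_def)
  then show ?thesis by (auto simp: lag_def)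
next
  case False
  define j where "j = i - 2"
  have j: "i = j + 2" "1 \<le> j" using False j_def by auto
  have "is_shift w j" using sh j unfolding is_shift_def
    by (auto simp: nth_Cons split: nat.splits)
  moreover have "lag (Inl a # Inr b # w) i = lag w j" using lag_shift2[of a b w j] j by simp
  ultimately show ?thesis using IH by simp
qed

lemma issync_lag: "issync w \<Longrightarrow> is_shift w i \<Longrightarrow> lag w i \<le> 1"
  apply (induction w arbitrary: i rule: issync.induct)
  apply (simp add: is_shift_def)
  apply (rule issync_lag2; auto)
  apply (simp only: issync.simps; metis allLR_noshift)+
  done

lemma LR_shift: "is_shift (map Inl u @ map Inr v) i \<Longrightarrow> i = length u"
proof (rule ccontr)
  assume sh: "is_shift (map Inl u @ map Inr v) i" and ne: "i \<noteq> length u"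
  let ?w = "map Inl u @ map Inr v"
  have i: "1 \<le> i" "i < length ?w" using sh by (auto simp: is_shift_def)
  show False
  proof (cases "i < length u")
    case True
    then have "?w ! i = Inl (u ! i)" "?w ! (i - 1) = Inl (u ! (i - 1))" by (auto simp: nth_append)
    then show False using sh by (auto simp: is_shift_def)
  next
    case False
    then have lu: "length u < i" using ne by simp
    moreover have "i - length u < length v" using i lu by simp
    ultimately have "?w ! i = Inr (v ! (i - length u))" "?w ! (i - 1) = Inr (v ! (i - 1 - length u))"
      by (auto simp: nth_append)
    then show False using sh by (auto simp: is_shift_def)
  qed
qed

lemma shiftlag_le1:
  assumes "\<And>n. has_consec_lagged_shifts w n \<Longrightarrow> n \<le> 1"
  shows "shiftlag w \<le> 1"
proof -
  have "has_consec_lagged_shifts w 0" unfolding has_consec_lagged_shifts_def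
    by (intro exI[of _ "[]"]) simp
  then have "has_consec_lagged_shifts w (shiftlag w)" unfolding shiftlag_def
    using assms by (rule GreatestI_nat)
  then show ?thesis using assms by blast
qed

lemma shiftlag_sync: "issync w \<Longrightarrow> shiftlag w \<le> 1"
proof (rule shiftlag_le1)
  fix n assume s: "issync w" and h: "has_consec_lagged_shifts w n"
  show "n \<le> 1"
  proof (rule ccontr)
    assume "\<not> n \<le> 1"
    from h obtain ks where l: "length ks = n" and sh: "\<forall>i\<in>set ks. is_shift w i \<and> lag w i \<ge> n"
      unfolding has_consec_lagged_shifts_def by blast
    have "ks ! 0 \<in> set ks" using l \<open>\<not> n \<le> 1\<close> by (intro nth_mem) simp
    then obtain i where "is_shift w i" "lag w i \<ge> n" using sh by blast
    then show False using issync_lag[OF s] \<open>\<not> n \<le> 1\<close> by fastforce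
  qed
qed

lemma shiftlag_LR: "sgw w \<Longrightarrow> shiftlag w \<le> 1"
proof (rule shiftlag_le1)
  fix n assume s: "sgw w" and h: "has_consec_lagged_shifts w n"
  then obtain u v where w: "w = map Inl u @ map Inr v" using sgw_iff by blast
  show "n \<le> 1"
  proof (rule ccontr)
    assume "\<not> n \<le> 1"
    from h obtain ks where l: "length ks = n" and so: "sorted_wrt (<) ks" and sh: "\<forall>i\<in>set ks. is_shift w i \<and> lag w i \<ge> n"
      unfolding has_consec_lagged_shifts_def by blast
    have "ks ! 0 < ks ! 1" using so l \<open>\<not> n \<le> 1\<close> by (simp add: sorted_wrt_iff_nth_less)
    moreover have "ks ! 0 \<in> set ks" "ks ! 1 \<in> set ks" using l \<open>\<not> n \<le> 1\<close> by (auto intro!: nth_mem)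
    then have "ks ! 0 = length u" "ks ! 1 = length u" using sh LR_shift w by blast+
    ultimately show False by simp
  qed
qed


lemma reach_append: "reach A p (u @ v) q \<longleftrightarrow> (\<exists>r. reach A p u r \<and> reach A r v q)"
  by (induction u arbitrary: p) auto

lemma regular_lang: "regular (lang A)"
  unfolding regular_def by blast

lemma regular_empty: "regular {}"
proof -
  have "lang (([], [], []) :: 'c nfa) = {}" by (simp add: lang_def)
  then show ?thesis unfolding regular_def by blast
qed

lemma reach_embed:
  assumes tr: "\<And>p c y. (f p, c, y) \<in> nfa_trans C \<longleftrightarrow> (\<exists>q. y = f q \<and> (p, c, q) \<in> nfa_trans A)"
  shows "reach C (f p) w x \<longleftrightarrow> (\<exists>q. x = f q \<and> reach A p w q)"
proof (induction w arbitrary: p)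
  case Nil then show ?case by auto
next
  case (Cons c w)
  have "reach C (f p) (c # w) x \<longleftrightarrow> (\<exists>y. (f p, c, y) \<in> nfa_trans C \<and> reach C y w x)" by simp
  also have "\<dots> \<longleftrightarrow> (\<exists>q. (p, c, q) \<in> nfa_trans A \<and> reach C (f q) w x)" unfolding tr by blast
  also have "\<dots> \<longleftrightarrow> (\<exists>q. (p, c, q) \<in> nfa_trans A \<and> (\<exists>q'. x = f q' \<and> reach A q w q'))" using Cons.IH by simp
  also have "\<dots> \<longleftrightarrow> (\<exists>q'. x = f q' \<and> reach A p (c # w) q')" by auto
  finally show ?case .
qed

definition tmap :: "(nat \<Rightarrow> nat) \<Rightarrow> (nat \<Rightarrow> nat) \<Rightarrow> (nat \<times> 'c \<times> nat) list \<Rightarrow> (nat \<times> 'c \<times> nat) list" where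
  "tmap f g D = map (\<lambda>(p, c, q). (f p, c, g q)) D"

lemma mem_tmap[simp]: "(x, c, y) \<in> set (tmap f g D) \<longleftrightarrow> (\<exists>p q. (p, c, q) \<in> set D \<and> x = f p \<and> y = g q)"
  unfolding tmap_def by (induction D) auto

lemma odd_even_ne[simp]: "Suc (2 * a) \<noteq> 2 * b" "2 * b \<noteq> Suc (2 * a)"
  by presburger+

fun UnA :: "'c nfa \<Rightarrow> 'c nfa \<Rightarrow> 'c nfa" where
  "UnA (I1, D1, F1) (I2, D2, F2) =
     (map (\<lambda>p. 2 * p) I1 @ map (\<lambda>p. 2 * p + 1) I2,
      tmap (\<lambda>p. 2 * p) (\<lambda>p. 2 * p) D1 @ tmap (\<lambda>p. 2 * p + 1) (\<lambda>p. 2 * p + 1) D2,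
      map (\<lambda>p. 2 * p) F1 @ map (\<lambda>p. 2 * p + 1) F2)"

lemma reach_UnA_even: "reach (UnA (I1, D1, F1) (I2, D2, F2)) (2 * p) w x \<longleftrightarrow> (\<exists>q. x = 2 * q \<and> reach (I1, D1, F1) p w q)"
  by (rule reach_embed[where f="\<lambda>p. 2 * p"]) auto

lemma reach_UnA_odd: "reach (UnA (I1, D1, F1) (I2, D2, F2)) (2 * p + 1) w x \<longleftrightarrow> (\<exists>q. x = 2 * q + 1 \<and> reach (I2, D2, F2) p w q)"
  by (rule reach_embed[where f="\<lambda>p. 2 * p + 1"]) auto

lemma lang_UnA: "lang (UnA A B) = lang A \<union> lang B"
proof -
  obtain I1 D1 F1 where A: "A = (I1, D1, F1)" by (cases A)
  obtain I2 D2 F2 where B: "B = (I2, D2, F2)" by (cases B)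
  let ?U = "UnA (I1, D1, F1) (I2, D2, F2)"
  have fin: "2 * q \<in> nfa_final ?U \<longleftrightarrow> q \<in> set F1" "2 * q + 1 \<in> nfa_final ?U \<longleftrightarrow> q \<in> set F2" for q
    by auto
  have ini: "p \<in> nfa_init ?U \<longleftrightarrow> (\<exists>p'. p = 2 * p' \<and> p' \<in> set I1) \<or> (\<exists>p'. p = 2 * p' + 1 \<and> p' \<in> set I2)" for p
    by auto
  show ?thesis
  proof (rule set_eqI)
    fix w
    show "w \<in> lang (UnA A B) \<longleftrightarrow> w \<in> lang A \<union> lang B"
    proof
      assume "w \<in> lang (UnA A B)"
      then obtain p q where p: "p \<in> nfa_init ?U" and q: "q \<in> nfa_final ?U" and r: "reach ?U p w q"
        unfolding A B lang_def by blast
      from p[unfolded ini] show "w \<in> lang A \<union> lang B"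
      proof
        assume "\<exists>p'. p = 2 * p' \<and> p' \<in> set I1"
        then obtain p' where "p = 2 * p'" "p' \<in> set I1" by blast
        moreover then obtain q' where "q = 2 * q'" "reach (I1, D1, F1) p' w q'" using r reach_UnA_even by blast
        ultimately show ?thesis using q fin unfolding A lang_def by auto
      next
        assume "\<exists>p'. p = 2 * p' + 1 \<and> p' \<in> set I2"
        then obtain p' where "p = 2 * p' + 1" "p' \<in> set I2" by blast
        moreover then obtain q' where "q = 2 * q' + 1" "reach (I2, D2, F2) p' w q'" using r reach_UnA_odd by blast
        ultimately show ?thesis using q fin unfolding B lang_def by auto
      qed
    next
      assume "w \<in> lang A \<union> lang B"
      then show "w \<in> lang (UnA A B)"
      proof
        assume "w \<in> lang A"
        then obtain p q where "p \<in> set I1" "q \<in> set F1" "reach (I1, D1, F1) p w q" unfolding A lang_def by auto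
        moreover then have "reach ?U (2 * p) w (2 * q)" using reach_UnA_even by blast
        ultimately show ?thesis unfolding A B lang_def using ini fin by blast
      next
        assume "w \<in> lang B"
        then obtain p q where "p \<in> set I2" "q \<in> set F2" "reach (I2, D2, F2) p w q" unfolding B lang_def by auto
        moreover then have "reach ?U (2 * p + 1) w (2 * q + 1)" using reach_UnA_odd by blast
        ultimately show ?thesis unfolding A B lang_def using ini fin by blast
      qed
    qed
  qed
qed

lemma regular_Un: "regular L1 \<Longrightarrow> regular L2 \<Longrightarrow> regular (L1 \<union> L2)"
  unfolding regular_def using lang_UnA by metis

fun CatA :: "'c nfa \<Rightarrow> 'c nfa \<Rightarrow> 'c nfa" where
  "CatA (I1, D1, F1) (I2, D2, F2) =
     (map (\<lambda>p. 2 * p) I1,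
      tmap (\<lambda>p. 2 * p) (\<lambda>p. 2 * p) D1 @ tmap (\<lambda>p. 2 * p + 1) (\<lambda>p. 2 * p + 1) D2 @
      concat (map (\<lambda>p. tmap (\<lambda>_. 2 * p) (\<lambda>q'. 2 * q' + 1) (filter (\<lambda>(q, c, q'). q \<in> set I2) D2)) F1),
      map (\<lambda>p. 2 * p + 1) F2 @ (if \<exists>q\<in>set I2. q \<in> set F2 then map (\<lambda>p. 2 * p) F1 else []))"

lemma reach_CatA_odd: "reach (CatA (I1, D1, F1) (I2, D2, F2)) (2 * p + 1) w x \<longleftrightarrow> (\<exists>q. x = 2 * q + 1 \<and> reach (I2, D2, F2) p w q)"
  by (rule reach_embed[where f="\<lambda>p. 2 * p + 1"]) auto

lemma trans_CatA_even: "(2 * p, c, y) \<in> nfa_trans (CatA (I1, D1, F1) (I2, D2, F2)) \<longleftrightarrow>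
   (\<exists>q. y = 2 * q \<and> (p, c, q) \<in> set D1) \<or> (\<exists>q0 q1. p \<in> set F1 \<and> q0 \<in> set I2 \<and> (q0, c, q1) \<in> set D2 \<and> y = 2 * q1 + 1)"
  by auto

lemma reach_CatA_even: "reach (CatA (I1, D1, F1) (I2, D2, F2)) (2 * p) w x \<longleftrightarrow>
   (\<exists>q. x = 2 * q \<and> reach (I1, D1, F1) p w q) \<or>
   (\<exists>u c v p' q0 q1 q'. w = u @ c # v \<and> reach (I1, D1, F1) p u p' \<and> p' \<in> set F1 \<and> q0 \<in> set I2 \<and>
       (q0, c, q1) \<in> set D2 \<and> reach (I2, D2, F2) q1 v q' \<and> x = 2 * q' + 1)"
proof (induction w arbitrary: p)
  case Nil then show ?case by auto
next
  case (Cons c w)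
  let ?C = "CatA (I1, D1, F1) (I2, D2, F2)"
  have L: "reach ?C (2 * p) (c # w) x \<longleftrightarrow>
     (\<exists>q. (p, c, q) \<in> set D1 \<and> reach ?C (2 * q) w x) \<or>
     (\<exists>q0 q1. p \<in> set F1 \<and> q0 \<in> set I2 \<and> (q0, c, q1) \<in> set D2 \<and> reach ?C (2 * q1 + 1) w x)"
    using trans_CatA_even[of p c] by (simp only: reach.simps) blast
  show ?case (is "?l \<longleftrightarrow> ?r1 \<or> ?r2")
  proof
    assume ?l
    then consider (a) q where "(p, c, q) \<in> set D1" "reach ?C (2 * q) w x"
      | (b) q0 q1 where "p \<in> set F1" "q0 \<in> set I2" "(q0, c, q1) \<in> set D2" "reach ?C (2 * q1 + 1) w x"
      using L by blast
    then show "?r1 \<or> ?r2"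
    proof cases
      case a
      from a(2)[unfolded Cons.IH] show ?thesis
      proof
        assume "\<exists>q'. x = 2 * q' \<and> reach (I1, D1, F1) q w q'"
        then show ?thesis using a(1) by auto
      next
        assume "\<exists>u c' v p' q0 q1 q'. w = u @ c' # v \<and> reach (I1, D1, F1) q u p' \<and> p' \<in> set F1 \<and> q0 \<in> set I2 \<and>
           (q0, c', q1) \<in> set D2 \<and> reach (I2, D2, F2) q1 v q' \<and> x = 2 * q' + 1"
        then obtain u c' v p' q0 q1 q' where h: "w = u @ c' # v" "reach (I1, D1, F1) q u p'" "p' \<in> set F1" "q0 \<in> set I2"
           "(q0, c', q1) \<in> set D2" "reach (I2, D2, F2) q1 v q'" "x = 2 * q' + 1" by blast
        have "c # w = (c # u) @ c' # v" "reach (I1, D1, F1) p (c # u) p'" using h a(1) by auto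
        then show ?thesis using h by blast
      qed
    next
      case b
      then obtain q' where "x = 2 * q' + 1" "reach (I2, D2, F2) q1 w q'" using reach_CatA_odd by blast
      then have "c # w = [] @ c # w \<and> reach (I1, D1, F1) p [] p" by simp
      then show ?thesis using b \<open>x = 2 * q' + 1\<close> \<open>reach (I2, D2, F2) q1 w q'\<close> by blast
    qed
  next
    assume "?r1 \<or> ?r2"
    then show ?l
    proof
      assume ?r1
      then obtain q' q where "x = 2 * q'" "(p, c, q) \<in> set D1" "reach (I1, D1, F1) q w q'" by auto
      then show ?l using L Cons.IH by blast
    next
      assume ?r2
      then obtain u c' v p' q0 q1 q' where h: "c # w = u @ c' # v" "reach (I1, D1, F1) p u p'" "p' \<in> set F1" "q0 \<in> set I2"
           "(q0, c', q1) \<in> set D2" "reach (I2, D2, F2) q1 v q'" "x = 2 * q' + 1" by blast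
      show ?l
      proof (cases u)
        case Nil
        then have "p' = p" "c' = c" "v = w" using h by auto
        then show ?l using L h reach_CatA_odd by blast
      next
        case (Cons c'' u')
        then have "c'' = c" "w = u' @ c' # v" using h by auto
        then obtain q where "(p, c, q) \<in> set D1" "reach (I1, D1, F1) q u' p'" using h Cons by auto
        then have "reach ?C (2 * q) w x" using Cons.IH h \<open>w = u' @ c' # v\<close> by blast
        then show ?l using L \<open>(p, c, q) \<in> set D1\<close> by blast
      qed
    qed
  qed
qed

lemma lang_CatA: "lang (CatA A B) = {u @ v | u v. u \<in> lang A \<and> v \<in> lang B}"
proof -
  obtain I1 D1 F1 where A: "A = (I1, D1, F1)" by (cases A)
  obtain I2 D2 F2 where B: "B = (I2, D2, F2)" by (cases B)
  let ?C = "CatA (I1, D1, F1) (I2, D2, F2)"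
  have ini: "p \<in> nfa_init ?C \<longleftrightarrow> (\<exists>p'. p = 2 * p' \<and> p' \<in> set I1)" for p by auto
  have fin1: "2 * q \<in> nfa_final ?C \<longleftrightarrow> q \<in> set F1 \<and> (\<exists>q\<in>set I2. q \<in> set F2)" for q by auto
  have fin2: "2 * q + 1 \<in> nfa_final ?C \<longleftrightarrow> q \<in> set F2" for q by auto
  have lA: "w \<in> lang A \<longleftrightarrow> (\<exists>p\<in>set I1. \<exists>q\<in>set F1. reach (I1, D1, F1) p w q)" for w unfolding A lang_def by simp
  have lB: "w \<in> lang B \<longleftrightarrow> (\<exists>p\<in>set I2. \<exists>q\<in>set F2. reach (I2, D2, F2) p w q)" for w unfolding B lang_def by simp
  have lC: "w \<in> lang (CatA A B) \<longleftrightarrow> (\<exists>p\<in>nfa_init ?C. \<exists>q\<in>nfa_final ?C. reach ?C p w q)" for w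
    unfolding A B lang_def by (rule mem_Collect_eq)
  show ?thesis
  proof (rule set_eqI)
    fix w
    show "w \<in> lang (CatA A B) \<longleftrightarrow> w \<in> {u @ v | u v. u \<in> lang A \<and> v \<in> lang B}"
    proof
      assume "w \<in> lang (CatA A B)"
      then obtain p0 x where p0: "p0 \<in> nfa_init ?C" and x: "x \<in> nfa_final ?C" and r0: "reach ?C p0 w x"
        unfolding lC by blast
      obtain p where p: "p \<in> set I1" "p0 = 2 * p" using p0 ini by blast
      have r: "reach ?C (2 * p) w x" using r0 p by simp
      from r[unfolded reach_CatA_even] show "w \<in> {u @ v | u v. u \<in> lang A \<and> v \<in> lang B}"
      proof
        assume "\<exists>q. x = 2 * q \<and> reach (I1, D1, F1) p w q"
        then obtain q where q: "x = 2 * q" "reach (I1, D1, F1) p w q" by blast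
        then have "q \<in> set F1" "\<exists>q\<in>set I2. q \<in> set F2" using x fin1 by simp_all
        then have "w \<in> lang A" "[] \<in> lang B" using p q unfolding lA lB by auto
        then show ?thesis by force
      next
        assume "\<exists>u c v p' q0 q1 q'. w = u @ c # v \<and> reach (I1, D1, F1) p u p' \<and> p' \<in> set F1 \<and> q0 \<in> set I2 \<and>
           (q0, c, q1) \<in> set D2 \<and> reach (I2, D2, F2) q1 v q' \<and> x = 2 * q' + 1"
        then obtain u c v p' q0 q1 q' where h: "w = u @ c # v" "reach (I1, D1, F1) p u p'" "p' \<in> set F1" "q0 \<in> set I2"
           "(q0, c, q1) \<in> set D2" "reach (I2, D2, F2) q1 v q'" "x = 2 * q' + 1" by blast
        then have "q' \<in> set F2" using x fin2 by simp
        then have "u \<in> lang A" "c # v \<in> lang B" using h p unfolding lA lB by auto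
        then show ?thesis using h by blast
      qed
    next
      assume "w \<in> {u @ v | u v. u \<in> lang A \<and> v \<in> lang B}"
      then obtain u v where w: "w = u @ v" and u: "u \<in> lang A" and v: "v \<in> lang B" by blast
      obtain p p' where p: "p \<in> set I1" "p' \<in> set F1" "reach (I1, D1, F1) p u p'" using u unfolding lA by blast
      obtain q0 q' where q: "q0 \<in> set I2" "q' \<in> set F2" "reach (I2, D2, F2) q0 v q'" using v unfolding lB by blast
      have p2: "2 * p \<in> nfa_init ?C" using ini p by blast
      show "w \<in> lang (CatA A B)"
      proof (cases v)
        case Nil
        then have "q0 = q'" using q by simp
        then have "2 * p' \<in> nfa_final ?C" using q p fin1 by blast
        moreover have "reach ?C (2 * p) w (2 * p')" unfolding reach_CatA_even using p w Nil by auto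
        ultimately show ?thesis unfolding lC using p2 by blast
      next
        case (Cons c v')
        then obtain q1 where q1: "(q0, c, q1) \<in> set D2" "reach (I2, D2, F2) q1 v' q'" using q by auto
        have "2 * q' + 1 \<in> nfa_final ?C" using q fin2 by blast
        moreover have "reach ?C (2 * p) w (2 * q' + 1)" unfolding reach_CatA_even
        proof (rule disjI2)
          show "\<exists>u c v p' q0 q1 q''. w = u @ c # v \<and> reach (I1, D1, F1) p u p' \<and> p' \<in> set F1 \<and> q0 \<in> set I2 \<and>
             (q0, c, q1) \<in> set D2 \<and> reach (I2, D2, F2) q1 v q'' \<and> 2 * q' + 1 = 2 * q'' + 1"
            using p q q1 w Cons by blast
        qed
        ultimately show ?thesis unfolding lC using p2 by blast
      qed
    qed
  qed
qed

lemma regular_conc: "regular L1 \<Longrightarrow> regular L2 \<Longrightarrow> regular {u @ v | u v. u \<in> L1 \<and> v \<in> L2}"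
proof -
  assume "regular L1" "regular L2"
  then obtain A B where "lang A = L1" "lang B = L2" unfolding regular_def by blast
  then have "lang (CatA A B) = {u @ v | u v. u \<in> L1 \<and> v \<in> L2}" using lang_CatA by blast
  then show ?thesis unfolding regular_def by blast
qed

definition cmap :: "('c \<Rightarrow> 'd) \<Rightarrow> (nat \<times> 'c \<times> nat) list \<Rightarrow> (nat \<times> 'd \<times> nat) list" where
  "cmap f D = map (\<lambda>(p, c, q). (p, f c, q)) D"

lemma mem_cmap[simp]: "(x, c, y) \<in> set (cmap f D) \<longleftrightarrow> (\<exists>a. (x, a, y) \<in> set D \<and> c = f a)"
  unfolding cmap_def by (induction D) auto

fun MapA :: "('c \<Rightarrow> 'd) \<Rightarrow> 'c nfa \<Rightarrow> 'd nfa" where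
  "MapA f (I, D, F) = (I, cmap f D, F)"

lemma reach_MapA: "inj f \<Longrightarrow> reach (MapA f (I, D, F)) p w q \<longleftrightarrow> (\<exists>u. w = map f u \<and> reach (I, D, F) p u q)"
proof (induction w arbitrary: p)
  case Nil then show ?case by auto
next
  case (Cons c w)
  show ?case
  proof
    assume "reach (MapA f (I, D, F)) p (c # w) q"
    then obtain p' a where h: "(p, a, p') \<in> set D" "c = f a" "reach (MapA f (I, D, F)) p' w q" by auto
    then obtain u where "w = map f u" "reach (I, D, F) p' u q" using Cons.IH[OF Cons.prems] by blast
    then show "\<exists>u. c # w = map f u \<and> reach (I, D, F) p u q" using h by (intro exI[of _ "a # u"]) auto
  next
    assume "\<exists>u. c # w = map f u \<and> reach (I, D, F) p u q"
    then obtain a u where "c = f a" "w = map f u" "reach (I, D, F) p (a # u) q" by (metis Cons_eq_map_D)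
    then show "reach (MapA f (I, D, F)) p (c # w) q" using Cons by force
  qed
qed

lemma lang_MapA: "inj f \<Longrightarrow> lang (MapA f A) = map f ` lang A"
proof -
  assume inj: "inj f"
  obtain I D F where A: "A = (I, D, F)" by (cases A)
  show ?thesis unfolding A lang_def using reach_MapA[OF inj] by auto
qed

lemma regular_map: "inj f \<Longrightarrow> regular L \<Longrightarrow> regular (map f ` L)"
proof -
  assume "inj f" "regular L"
  then obtain A where "lang A = L" unfolding regular_def by blast
  then have "lang (MapA f A) = map f ` L" using lang_MapA[OF \<open>inj f\<close>] by blast
  then show ?thesis unfolding regular_def by blast
qed

definition LR :: "'s list set \<Rightarrow> 'g list set \<Rightarrow> ('s + 'g) list set" where
  "LR U V = {map Inl u @ map Inr v | u v. u \<in> U \<and> v \<in> V}"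

lemma regular_LR: "regular U \<Longrightarrow> regular V \<Longrightarrow> regular (LR U V)"
proof -
  assume "regular U" "regular V"
  then have "regular {u @ v | u v. u \<in> map Inl ` U \<and> v \<in> map Inr ` V}"
    by (intro regular_conc regular_map) (auto simp: inj_def)
  moreover have "{u @ v | u v. u \<in> map Inl ` U \<and> v \<in> map Inr ` V} = LR U V"
    unfolding LR_def by blast
  ultimately show ?thesis by simp
qed


section \<open>Splitting a regular language of Sigma*Gamma* words\<close>

definition Lpart :: "(nat \<times> ('s + 'g) \<times> nat) list \<Rightarrow> (nat \<times> 's \<times> nat) list" where
  "Lpart D = map (\<lambda>(p, c, q). (p, projl c, q)) (filter (\<lambda>(p, c, q). isl c) D)"
definition Rpart :: "(nat \<times> ('s + 'g) \<times> nat) list \<Rightarrow> (nat \<times> 'g \<times> nat) list" where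
  "Rpart D = map (\<lambda>(p, c, q). (p, projr c, q)) (filter (\<lambda>(p, c, q). \<not> isl c) D)"

lemma mem_Lpart: "(p, a, q) \<in> set (Lpart D) \<longleftrightarrow> (p, Inl a, q) \<in> set D"
proof
  assume "(p, a, q) \<in> set (Lpart D)"
  then obtain p' c q' where "(p', c, q') \<in> set D" "isl c" "(p, a, q) = (p', projl c, q')"
    unfolding Lpart_def by auto
  then show "(p, Inl a, q) \<in> set D" by (cases c) auto
next
  assume "(p, Inl a, q) \<in> set D"
  then show "(p, a, q) \<in> set (Lpart D)" unfolding Lpart_def by force
qed

lemma mem_Rpart: "(p, b, q) \<in> set (Rpart D) \<longleftrightarrow> (p, Inr b, q) \<in> set D"
proof
  assume "(p, b, q) \<in> set (Rpart D)"
  then obtain p' c q' where "(p', c, q') \<in> set D" "\<not> isl c" "(p, b, q) = (p', projr c, q')"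
    unfolding Rpart_def by auto
  then show "(p, Inr b, q) \<in> set D" by (cases c) auto
next
  assume "(p, Inr b, q) \<in> set D"
  then show "(p, b, q) \<in> set (Rpart D)" unfolding Rpart_def by force
qed

lemma reach_Lpart: "reach (I', Lpart D, F') p u q \<longleftrightarrow> reach (I, D, F) p (map Inl u) q"
  by (induction u arbitrary: p) (auto simp: mem_Lpart)

lemma reach_Rpart: "reach (I', Rpart D, F') p v q \<longleftrightarrow> reach (I, D, F) p (map Inr v) q"
  by (induction v arbitrary: p) (auto simp: mem_Rpart)

definition SL :: "'c nfa \<Rightarrow> nat list" where
  "SL B = (case B of (I, D, F) \<Rightarrow> I @ map (\<lambda>(p, c, q). q) D)"

lemma reach_SL: "reach (I, D, F) p w q \<Longrightarrow> p \<in> set (SL (I, D, F)) \<Longrightarrow> q \<in> set (SL (I, D, F))"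
proof (induction w arbitrary: p)
  case (Cons c w)
  then obtain p' where "(p, c, p') \<in> set D" "reach (I, D, F) p' w q" by auto
  moreover then have "p' \<in> set (SL (I, D, F))" unfolding SL_def by force
  ultimately show ?case using Cons.IH by blast
qed simp

definition Upart :: "('s + 'g) nfa \<Rightarrow> nat \<Rightarrow> 's list set" where
  "Upart B r = (case B of (I, D, F) \<Rightarrow> lang (I, Lpart D, [r]))"
definition Vpart :: "('s + 'g) nfa \<Rightarrow> nat \<Rightarrow> 'g list set" where
  "Vpart B r = (case B of (I, D, F) \<Rightarrow> lang ([r], Rpart D, F))"

lemma split_sem: fixes B :: "('s + 'g) nfa" shows "semL (lang B \<inter> {w. sgw w}) = (\<Union>r\<in>set (SL B). Upart B r \<times> Vpart B r)"
proof -
  obtain I D F where B: "B = (I, D, F)" by (cases B)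
  show ?thesis
  proof (rule set_eqI)
    fix x :: "'s list \<times> 'g list"
    show "x \<in> semL (lang B \<inter> {w. sgw w}) \<longleftrightarrow> x \<in> (\<Union>r\<in>set (SL B). Upart B r \<times> Vpart B r)"
    proof
      assume "x \<in> semL (lang B \<inter> {w. sgw w})"
      then obtain w where w: "w \<in> lang B" "sgw w" "x = sem w" unfolding semL_def by blast
      then obtain u v where uv: "w = map Inl u @ map Inr v" using sgw_iff by blast
      then have x: "x = (u, v)" using w by simp
      obtain p q where pq: "p \<in> set I" "q \<in> set F" "reach (I, D, F) p w q" using w(1) unfolding B lang_def by auto
      then obtain r where r: "reach (I, D, F) p (map Inl u) r" "reach (I, D, F) r (map Inr v) q"
        using uv reach_append[of "(I, D, F)" p "map Inl u" "map Inr v" q] by blast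
      have "r \<in> set (SL B)" using reach_SL[OF r(1)] pq(1) unfolding B SL_def by auto
      moreover have "reach (I, Lpart D, [r]) p u r" using r(1) reach_Lpart[of I D "[r]" p u r I F] by blast
      then have "u \<in> Upart B r" unfolding B Upart_def lang_def using pq by auto
      moreover have "reach ([r], Rpart D, F) r v q" using r(2) reach_Rpart[of "[r]" D F r v q I F] by blast
      then have "v \<in> Vpart B r" unfolding B Vpart_def lang_def using pq by auto
      ultimately show "x \<in> (\<Union>r\<in>set (SL B). Upart B r \<times> Vpart B r)" using x by blast
    next
      assume "x \<in> (\<Union>r\<in>set (SL B). Upart B r \<times> Vpart B r)"
      then obtain r u v where x: "x = (u, v)" and u: "u \<in> Upart B r" and v: "v \<in> Vpart B r" by blast
      obtain p where p: "p \<in> set I" "reach (I, Lpart D, [r]) p u r"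
        using u unfolding B Upart_def lang_def by auto
      then have p2: "reach (I, D, F) p (map Inl u) r" using reach_Lpart[of I D "[r]" p u r I F] by blast
      obtain q where q: "q \<in> set F" "reach ([r], Rpart D, F) r v q"
        using v unfolding B Vpart_def lang_def by auto
      then have q2: "reach (I, D, F) r (map Inr v) q" using reach_Rpart[of "[r]" D F r v q I F] by blast
      have "reach (I, D, F) p (map Inl u @ map Inr v) q" using p2 q2 reach_append[of "(I, D, F)" p "map Inl u" "map Inr v" q] by blast
      then have "map Inl u @ map Inr v \<in> lang B" unfolding B lang_def using p q by auto
      moreover have "sgw (map Inl u @ map Inr v)" using sgw_iff by blast
      ultimately show "x \<in> semL (lang B \<inter> {w. sgw w})" unfolding semL_def using x
        by (intro image_eqI[where x="map Inl u @ map Inr v"]) auto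
    qed
  qed
qed

lemma regular_Upart: "regular (Upart B r)"
  by (cases B) (simp add: Upart_def regular_lang)
lemma regular_Vpart: "regular (Vpart B r)"
  by (cases B) (simp add: Vpart_def regular_lang)

lemma recog_split: fixes B :: "('s + 'g) nfa" shows "recognizable (semL (lang B \<inter> {w. sgw w}))"
  unfolding recognizable_def split_sem
proof (intro exI[of _ "map (\<lambda>r. (Upart B r, Vpart B r)) (SL B)"] conjI)
  show "\<forall>(U, V)\<in>set (map (\<lambda>r. (Upart B r, Vpart B r)) (SL B)). regular U \<and> regular V"
    by (auto simp: regular_Upart regular_Vpart)
  show "(\<Union>r\<in>set (SL B). Upart B r \<times> Vpart B r) = (\<Union>(U, V)\<in>set (map (\<lambda>r. (Upart B r, Vpart B r)) (SL B)). U \<times> V)"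
    by auto
qed

lemma regular_LRs: "\<forall>(U, V)\<in>set ps. regular U \<and> regular V \<Longrightarrow> regular (\<Union>(U, V)\<in>set ps. LR U V)"
proof (induction ps)
  case Nil then show ?case using regular_empty by simp
next
  case (Cons a ps)
  obtain U V where a: "a = (U, V)" by (cases a)
  have "(\<Union>(U, V)\<in>set (a # ps). LR U V) = LR U V \<union> (\<Union>(U, V)\<in>set ps. LR U V)" using a by simp
  then show ?case using Cons a by (simp add: regular_Un regular_LR)
qed

lemma semL_LR: "semL (LR U V) = U \<times> V"
proof (rule set_eqI)
  fix x :: "'a list \<times> 'b list"
  show "x \<in> semL (LR U V) \<longleftrightarrow> x \<in> U \<times> V"
  proof
    assume "x \<in> semL (LR U V)"
    then show "x \<in> U \<times> V" unfolding semL_def LR_def by auto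
  next
    assume "x \<in> U \<times> V"
    then obtain u v where "x = (u, v)" "u \<in> U" "v \<in> V" by blast
    then show "x \<in> semL (LR U V)" unfolding semL_def LR_def
      by (intro image_eqI[where x="map Inl u @ map Inr v"]) auto
  qed
qed

lemma semL_Un: "semL (A \<union> B) = semL A \<union> semL B"
  unfolding semL_def by (rule image_Un)

lemma semL_empty: "semL {} = {}"
  unfolding semL_def by simp

lemma semL_LRs: "semL (\<Union>(U, V)\<in>set ps. LR U V) = (\<Union>(U, V)\<in>set ps. U \<times> V)"
proof (induction ps)
  case Nil then show ?case by (simp add: semL_empty)
next
  case (Cons a ps)
  obtain U V where a: "a = (U, V)" by (cases a)
  have "(\<Union>(U, V)\<in>set (a # ps). LR U V) = LR U V \<union> (\<Union>(U, V)\<in>set ps. LR U V)" using a by simp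
  then show ?case using Cons a by (simp add: semL_Un semL_LR)
qed

lemma sgw_LRs: "w \<in> (\<Union>(U, V)\<in>set ps. LR U V) \<Longrightarrow> sgw w"
  unfolding LR_def using sgw_iff by blast


lemma langS:
  assumes K: "K = length (enum_class.enum :: ('s::enum + 'g::enum) list)"
    and K1: "K1 = length (enum_class.enum :: 's list)"
    and n: "n = enc_pair (A1 :: ('s + 'g) nfa) (A2 :: ('s + 'g) nfa)"
  shows "lang (Aut PhiS K K1 n :: ('s + 'g) nfa) = {w. issync w \<and> w \<notin> lang A2}"
proof -
  have n': "n = prod_encode (enc_nfa A1, enc_nfa A2)" using n by (simp add: enc_pair_def)
  show ?thesis unfolding lang_Aut[OF K K1 n'] PhiS_def using fold_sd0 by auto
qed

lemma langT:
  assumes K: "K = length (enum_class.enum :: ('s::enum + 'g::enum) list)"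
    and K1: "K1 = length (enum_class.enum :: 's list)"
    and n: "n = enc_pair (A1 :: ('s + 'g) nfa) (A2 :: ('s + 'g) nfa)"
  shows "lang (Aut PhiT K K1 n :: ('s + 'g) nfa) = {w. sgw w \<or> (issync w \<and> w \<notin> lang A1 \<and> w \<notin> lang A2)}"
proof -
  have n': "n = prod_encode (enc_nfa A1, enc_nfa A2)" using n by (simp add: enc_pair_def)
  show ?thesis unfolding lang_Aut[OF K K1 n'] PhiT_def using fold_sd0 fold_td0 by auto
qed

lemma langX:
  assumes K: "K = length (enum_class.enum :: ('s::enum + 'g::enum) list)"
    and K1: "K1 = length (enum_class.enum :: 's list)"
    and n: "n = enc_pair (A1 :: ('s + 'g) nfa) (A2 :: ('s + 'g) nfa)"
  shows "lang (Aut PhiX K K1 n :: ('s + 'g) nfa) = {w. issync w \<and> w \<notin> lang A1 \<and> w \<notin> lang A2}"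
proof -
  have n': "n = prod_encode (enc_nfa A1, enc_nfa A2)" using n by (simp add: enc_pair_def)
  show ?thesis unfolding lang_Aut[OF K K1 n'] PhiX_def using fold_sd0 by auto
qed

lemma semL_sync_compl:
  assumes L: "\<forall>w\<in>L. issync (w :: ('s + 'g) list)"
  shows "semL {w. issync w \<and> w \<notin> L} = - semL L"
proof (rule set_eqI)
  fix x :: "'s list \<times> 'g list"
  show "x \<in> semL {w. issync w \<and> w \<notin> L} \<longleftrightarrow> x \<in> - semL L"
  proof
    assume "x \<in> semL {w. issync w \<and> w \<notin> L}"
    then obtain w where w: "issync w" "w \<notin> L" "x = sem w" unfolding semL_def by blast
    show "x \<in> - semL L"
    proof
      assume "x \<in> semL L"
      then obtain w' where "w' \<in> L" "x = sem w'" unfolding semL_def by blast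
      moreover have "issync w'" using L \<open>w' \<in> L\<close> by blast
      ultimately have "w = w'" using sem_inj_sync[OF w(1)] w(3) by simp
      then show False using w(2) \<open>w' \<in> L\<close> by simp
    qed
  next
    assume x: "x \<in> - semL L"
    obtain u v where uv: "x = (u, v)" by (cases x)
    have "syn u v \<notin> L"
    proof
      assume "syn u v \<in> L"
      then have "(u, v) \<in> semL L" unfolding semL_def by (intro image_eqI[where x="syn u v"]) auto
      then show False using x uv by simp
    qed
    then show "x \<in> semL {w. issync w \<and> w \<notin> L}" unfolding semL_def using uv issync_syn
      by (intro image_eqI[where x="syn u v"]) auto
  qed
qed

lemma main_equiv:
  fixes A1 A2 :: "('s::enum + 'g::enum) nfa"
  assumes h1: "lang A1 \<subseteq> sync_words" and h2: "lang A2 \<subseteq> sync_words"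
    and disj: "semL (lang A1) \<inter> semL (lang A2) = {}"
    and S: "lang S = {w. issync w \<and> w \<notin> lang A2}"
    and T: "lang T = {w. sgw w \<or> (issync w \<and> w \<notin> lang A1 \<and> w \<notin> lang A2)}"
    and X: "lang X = {w. issync w \<and> w \<notin> lang A1 \<and> w \<notin> lang A2}"
  shows "(\<exists>R. recognizable R \<and> semL (lang A1) \<subseteq> R \<and> R \<inter> semL (lang A2) = {})
          \<longleftrightarrow> semL (lang S) \<in> Rel (lang T)"
proof -
  let ?P1 = "semL (lang A1)" and ?P2 = "semL (lang A2)"
  have s1: "\<forall>w\<in>lang A1. issync w" using h1 issync_sync by blast
  have s2: "\<forall>w\<in>lang A2. issync w" using h2 issync_sync by blast
  have s12: "\<forall>w\<in>lang A1 \<union> lang A2. issync w" using s1 s2 by blast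
  have semS: "semL (lang S) = - ?P2" unfolding S using semL_sync_compl[OF s2] .
  have "{w. issync w \<and> w \<notin> lang A1 \<and> w \<notin> lang A2} = {w. issync w \<and> w \<notin> lang A1 \<union> lang A2}" by auto
  then have semX: "semL (lang X) = - (?P1 \<union> ?P2)" unfolding X using semL_sync_compl[OF s12]
    by (simp add: semL_Un)
  show ?thesis
  proof
    assume "\<exists>R. recognizable R \<and> ?P1 \<subseteq> R \<and> R \<inter> ?P2 = {}"
    then obtain R where R: "recognizable R" "?P1 \<subseteq> R" "R \<inter> ?P2 = {}" by blast
    then obtain ps where ps: "\<forall>(U, V)\<in>set ps. regular U \<and> regular V" "R = (\<Union>(U, V)\<in>set ps. U \<times> V)"
      unfolding recognizable_def by blast
    define T' where "T' = (\<Union>(U, V)\<in>set ps. LR U V) \<union> lang X"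
    have "regular T'" unfolding T'_def by (intro regular_Un regular_LRs ps(1) regular_lang)
    moreover have "T' \<subseteq> lang T" unfolding T'_def T X using sgw_LRs by blast
    moreover have "semL T' = semL (lang S)"
    proof -
      have "semL T' = R \<union> - (?P1 \<union> ?P2)" unfolding T'_def semL_Un semL_LRs semX ps(2) ..
      also have "\<dots> = - ?P2" using R(2,3) by blast
      finally show ?thesis using semS by simp
    qed
    ultimately show "semL (lang S) \<in> Rel (lang T)" unfolding Rel_def by blast
  next
    assume "semL (lang S) \<in> Rel (lang T)"
    then obtain T' where T': "semL (lang S) = semL T'" "T' \<subseteq> lang T" "regular T'" unfolding Rel_def by blast
    then obtain B where B: "lang B = T'" unfolding regular_def by blast
    define R where "R = semL (lang B \<inter> {w. sgw w})"
    have "recognizable R" unfolding R_def by (rule recog_split)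
    moreover have "R \<subseteq> - ?P2"
    proof -
      have "R \<subseteq> semL T'" unfolding R_def semL_def B by blast
      then show ?thesis using T'(1) semS by simp
    qed
    moreover have "?P1 \<subseteq> R"
    proof
      fix x assume x: "x \<in> ?P1"
      then have "x \<in> - ?P2" using disj by blast
      then have "x \<in> semL T'" unfolding T'(1)[symmetric] semS .
      then obtain w where w: "w \<in> T'" "x = sem w" unfolding semL_def by blast
      from x obtain w1 where w1: "w1 \<in> lang A1" "x = sem w1" unfolding semL_def by blast
      have "w \<in> lang T" using w T' by blast
      then have "sgw w \<or> (issync w \<and> w \<notin> lang A1)" unfolding T by blast
      moreover have "issync w \<Longrightarrow> w = w1"
      proof -
        assume "issync w"
        moreover have "issync w1" using s1 w1(1) by blast
        ultimately show "w = w1" using sem_inj_sync w(2) w1(2) by metis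
      qed
      ultimately have "sgw w" using w1 by blast
      then show "x \<in> R" unfolding R_def semL_def using w B by blast
    qed
    ultimately show "\<exists>R. recognizable R \<and> ?P1 \<subseteq> R \<and> R \<inter> ?P2 = {}" by blast
  qed
qed

lemma finite_shiftlag_I: "(\<And>w. w \<in> L \<Longrightarrow> issync w \<or> sgw w) \<Longrightarrow> finite_shiftlag L"
  unfolding finite_shiftlag_def using shiftlag_sync shiftlag_LR by blast

theorem mainTheorem10:
  "\<exists>F. computable F \<and>
     (\<forall>A1 A2 :: ('s::enum + 'g::enum) nfa.
        lang A1 \<subseteq> sync_words \<and> lang A2 \<subseteq> sync_words \<and> semL (lang A1) \<inter> semL (lang A2) = {}
        \<longrightarrow> (\<exists>S T :: ('s + 'g) nfa.
               F (enc_pair A1 A2) = enc_pair S T \<and>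
               finite_shiftlag (lang S) \<and> finite_shiftlag (lang T) \<and>
               ((\<exists>R. recognizable R \<and> semL (lang A1) \<subseteq> R \<and> R \<inter> semL (lang A2) = {})
                  \<longleftrightarrow> semL (lang S) \<in> Rel (lang T))))"
proof -
  define K where "K = length (enum_class.enum :: ('s + 'g) list)"
  define K1 where "K1 = length (enum_class.enum :: 's list)"
  show ?thesis
  proof (intro exI[of _ "Fmain K K1"] conjI allI impI)
    show "computable (Fmain K K1)" by (rule c_Fmain)
  next
    fix A1 A2 :: "('s + 'g) nfa"
    assume h: "lang A1 \<subseteq> sync_words \<and> lang A2 \<subseteq> sync_words \<and> semL (lang A1) \<inter> semL (lang A2) = {}"
    define n where "n = enc_pair A1 A2"
    let ?S = "Aut PhiS K K1 n :: ('s + 'g) nfa"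
    let ?T = "Aut PhiT K K1 n :: ('s + 'g) nfa"
    let ?X = "Aut PhiX K K1 n :: ('s + 'g) nfa"
    have S: "lang ?S = {w. issync w \<and> w \<notin> lang A2}" by (rule langS[OF K_def K1_def n_def])
    have T: "lang ?T = {w. sgw w \<or> (issync w \<and> w \<notin> lang A1 \<and> w \<notin> lang A2)}" by (rule langT[OF K_def K1_def n_def])
    have X: "lang ?X = {w. issync w \<and> w \<notin> lang A1 \<and> w \<notin> lang A2}" by (rule langX[OF K_def K1_def n_def])
    have enc: "Fmain K K1 (enc_pair A1 A2) = enc_pair ?S ?T"
      by (simp only: Fmain_def enc_Aut[OF K_def] n_def enc_pair_def)
    show "\<exists>S T :: ('s + 'g) nfa. Fmain K K1 (enc_pair A1 A2) = enc_pair S T \<and>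
               finite_shiftlag (lang S) \<and> finite_shiftlag (lang T) \<and>
               ((\<exists>R. recognizable R \<and> semL (lang A1) \<subseteq> R \<and> R \<inter> semL (lang A2) = {})
                  \<longleftrightarrow> semL (lang S) \<in> Rel (lang T))"
    proof -
      have f1: "finite_shiftlag (lang ?S)" by (rule finite_shiftlag_I) (auto simp: S)
      have f2: "finite_shiftlag (lang ?T)" by (rule finite_shiftlag_I) (auto simp: T)
      have eq: "(\<exists>R. recognizable R \<and> semL (lang A1) \<subseteq> R \<and> R \<inter> semL (lang A2) = {}) \<longleftrightarrow> semL (lang ?S) \<in> Rel (lang ?T)"
        using h by (intro main_equiv[OF _ _ _ S T X]) auto
      show ?thesis using enc f1 f2 eq by blast
    qed
  qed
qed


end
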